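(* Let $k$ be a field, $\Gamma$ a $k$-algebra, $M$ a $\Gamma$-module and $n\geq 1$, with a complex $\mathrm{P}$, maps $\alpha,\beta$, the complex $\mathcal{P}$, the DG-algebra $\mathcal{E}=\mathcal{E}nd_\Gamma(\mathcal{P})$, the element $\sigma$, and the graded spaces ${}^{\sigma}\mathcal{E}$, ${}^{-\sigma}\mathcal{E}$ as in the context. Let $\mathcal{T}$ be the graded vector space whose degree $j$ part consists of pairs $(x,y)$ with $x\in{}^{\sigma}\mathcal{E}^{j}$ and $y\in{}^{-\sigma}\mathcal{E}^{j-n+1}$ (so $\mathcal{T}={}^{\sigma}\mathcal{E}\oplus{}^{-\sigma}\mathcal{E}[1-n]$), with multiplication defined on homogeneous elements by \[(x,y)\cdot(a,b)=\big(x\circ a,\; x\circ b+(-1)^{|a|(|\sigma|+1)}\,y\circ a\big)\] and differential \[\xi(x,y)=\big(\delta(x)-(-1)^{|x|}\,y\circ\sigma,\;\delta(y)\big),\] both extended linearly (here $|x|,|y|,|a|$ are the degrees as elements of $\mathcal{E}$, and $|\sigma|=n$). Then $(\mathcal{T},\cdot,\xi)$ is a DG-algebra (the trivial extension DG-algebra).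
   Context: Modules are right modules. $\Gamma$ is a $k$-algebra, $M$ a $\Gamma$-module, $n\ge 1$. We are given a complex of finitely generated projective $\Gamma$-modules $\mathrm{P}=(0\to P_{n-1}\xrightarrow{d_{n-1}}\cdots\xrightarrow{d_1}P_0\to 0)$, with $P_i$ in cohomological degree $-i$, and maps $\alpha\colon P_0\to M$, $\beta\colon M\to P_{n-1}$ such that $0\to M\xrightarrow{\beta}P_{n-1}\to\cdots\to P_0\xrightarrow{\alpha}M\to 0$ is exact. Put $d_0=\beta\circ\alpha\colon P_0\to P_{n-1}$. Let $\mathcal{P}$ be the complex (a projective resolution of $M$) whose component in degree $-(\ell n+i)$, for $\ell\ge 0$ and $0\le i\le n-1$, is a copy of $P_i$ ("the $\ell$-th copy"), with differential $(-1)^{\ell n}d_i$ from the $\ell$-th copy of $P_i$ to the $\ell$-th copy of $P_{i-1}$ for $i\ge1$, and $(-1)^{\ell n}d_0$ from the $(\ell+1)$-th copy of $P_0$ to the $\ell$-th copy of $P_{n-1}$; all other components are zero. (Thus $\mathcal{P}=\cdots\to\mathrm{P}[2n]\xrightarrow{d_0[n]}\mathrm{P}[n]\xrightarrow{d_0}\mathrm{P}\to0$, where $[1]$ shifts left and negates the differential.) $\mathcal{E}=\mathcal{E}nd_\Gamma(\mathcal{P})$ is the DG endomorphism algebra: $\mathcal{E}^i$ consists of collections of $\Gamma$-maps $\mathcal{P}^j\to\mathcal{P}^{j+i}$ (no compatibility required), multiplication is composition $\circ$, and the differential is $\delta(f)=d_{\mathcal{P}}\circ f-(-1)^{|f|}f\circ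 d_{\mathcal{P}}$. $\sigma\in\mathcal{E}^n$ is the map which is the identity from the $\ell$-th copy of $P_i$ to the $(\ell-1)$-th copy of $P_i$ for all $\ell\ge1$, and zero on the $0$-th copy. Define ${}^{\sigma}\mathcal{E}^i=\{x\in\mathcal{E}^i:\sigma\circ x=(-1)^{|\sigma||x|}x\circ\sigma\}$ and ${}^{-\sigma}\mathcal{E}^i=\{y\in\mathcal{E}^i:\sigma\circ y=(-1)^{|\sigma|(|y|+1)}y\circ\sigma\}$, with ${}^{\pm\sigma}\mathcal{E}=\bigoplus_i{}^{\pm\sigma}\mathcal{E}^i$. *)

theory Defs
  imports Main
begin

record ('m,'g) rmod =
  mcar :: "'m set"
  madd :: "'m \<Rightarrow> 'm \<Rightarrow> 'm"
  mzero :: "'m"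
  mneg :: "'m \<Rightarrow> 'm"
  mact :: "'m \<Rightarrow> 'g \<Rightarrow> 'm"

definition right_module :: "('m,'g::ring_1) rmod \<Rightarrow> bool" where
  "right_module M \<longleftrightarrow>
     mzero M \<in> mcar M \<and>
     (\<forall>x\<in>mcar M. \<forall>y\<in>mcar M. madd M x y \<in> mcar M) \<and>
     (\<forall>x\<in>mcar M. mneg M x \<in> mcar M) \<and>
     (\<forall>x\<in>mcar M. \<forall>a. mact M x a \<in> mcar M) \<and>
     (\<forall>x\<in>mcar M. \<forall>y\<in>mcar M. \<forall>z\<in>mcar M. madd M (madd M x y) z = madd M x (madd M y z)) \<and>
     (\<forall>x\<in>mcar M. \<forall>y\<in>mcar M. madd M x y = madd M y x) \<and>
     (\<forall>x\<in>mcar M. madd M (mzero M) x = x) \<and>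
     (\<forall>x\<in>mcar M. madd M (mneg M x) x = mzero M) \<and>
     (\<forall>x\<in>mcar M. mact M x 1 = x) \<and>
     (\<forall>x\<in>mcar M. \<forall>a b. mact M x (a * b) = mact M (mact M x a) b) \<and>
     (\<forall>x\<in>mcar M. \<forall>y\<in>mcar M. \<forall>a. mact M (madd M x y) a = madd M (mact M x a) (mact M y a)) \<and>
     (\<forall>x\<in>mcar M. \<forall>a b. mact M x (a + b) = madd M (mact M x a) (mact M x b))"

definition module_hom :: "('m,'g::ring_1) rmod \<Rightarrow> ('n,'g) rmod \<Rightarrow> ('m \<Rightarrow> 'n) \<Rightarrow> bool" where
  "module_hom M N f \<longleftrightarrow>
     (\<forall>x\<in>mcar M. f x \<in> mcar N) \<and>
     (\<forall>x\<in>mcar M. \<forall>y\<in>mcar M. f (madd M x y) = madd N (f x) (f y)) \<and>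
     (\<forall>x\<in>mcar M. \<forall>a. f (mact M x a) = mact N (f x) a)"

definition free_mod :: "nat \<Rightarrow> (nat \<Rightarrow> 'g::ring_1, 'g) rmod" where
  "free_mod m = \<lparr> mcar = {v. \<forall>i\<ge>m. v i = 0},
                  madd = (\<lambda>v w i. v i + w i),
                  mzero = (\<lambda>i. 0),
                  mneg = (\<lambda>v i. - v i),
                  mact = (\<lambda>v a i. v i * a) \<rparr>"

text \<open>finitely generated projective = direct summand of a finite free module\<close>
definition fg_projective :: "('m,'g::ring_1) rmod \<Rightarrow> bool" where
  "fg_projective P \<longleftrightarrow> (\<exists>m s r. module_hom P (free_mod m) s \<and> module_hom (free_mod m) P r \<and>
                                  (\<forall>x\<in>mcar P. r (s x) = x))"

definition k_algebra :: "('k::field \<Rightarrow> 'g::ring_1) \<Rightarrow> bool" where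
  "k_algebra \<iota> \<longleftrightarrow> \<iota> 1 = 1 \<and> (\<forall>a b. \<iota> (a + b) = \<iota> a + \<iota> b) \<and>
                    (\<forall>a b. \<iota> (a * b) = \<iota> a * \<iota> b) \<and> (\<forall>a g. \<iota> a * g = g * \<iota> a)"

text \<open>Exactness of 0 -> M -beta-> P_(n-1) -d_(n-1)-> ... -d_1-> P_0 -alpha-> M -> 0.
  The map into P_i is beta (if i = n-1) or d_(i+1); the map out of P_i is alpha (if i = 0) or d_i.\<close>
definition exact_seq :: "nat \<Rightarrow> (nat \<Rightarrow> ('m,'g::ring_1) rmod) \<Rightarrow> (nat \<Rightarrow> 'm \<Rightarrow> 'm)
     \<Rightarrow> ('m,'g) rmod \<Rightarrow> ('m \<Rightarrow> 'm) \<Rightarrow> ('m \<Rightarrow> 'm) \<Rightarrow> bool" where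
  "exact_seq n P d M \<alpha> \<beta> \<longleftrightarrow>
     inj_on \<beta> (mcar M) \<and>
     \<alpha> ` mcar (P 0) = mcar M \<and>
     (\<forall>i<n. (if i = n - 1 then \<beta> else d (i + 1)) ` mcar (if i = n - 1 then M else P (i + 1))
             = {x \<in> mcar (P i). (if i = 0 then \<alpha> else d i) x = mzero (if i = 0 then M else P (i - 1))})"

definition zero_mod :: "('m,'g) rmod \<Rightarrow> ('m,'g) rmod" where
  "zero_mod Q = \<lparr> mcar = {mzero Q}, madd = (\<lambda>_ _. mzero Q), mzero = mzero Q,
                  mneg = (\<lambda>_. mzero Q), mact = (\<lambda>_ _. mzero Q) \<rparr>"

text \<open>Component of \<P> in cohomological degree j: degree -(l*n+i) is (the l-th copy of) P_i.\<close>
definition cpx :: "nat \<Rightarrow> (nat \<Rightarrow> ('m,'g) rmod) \<Rightarrow> int \<Rightarrow> ('m,'g) rmod" where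
  "cpx n P j = (if j \<le> 0 then P (nat (- j) mod n) else zero_mod (P 0))"

definition sgn_app :: "('m,'g) rmod \<Rightarrow> int \<Rightarrow> 'm \<Rightarrow> 'm" where
  "sgn_app Q e x = (if even e then x else mneg Q x)"

text \<open>Differential of \<P> from degree j to degree j+1.  For -j = l*n+i with i \<ge> 1 it is
  (-1)^(l n) d_i; for -j = l*n with l \<ge> 1 it is (-1)^((l-1) n) d_0, d_0 = beta o alpha.\<close>
definition dP :: "nat \<Rightarrow> (nat \<Rightarrow> ('m,'g) rmod) \<Rightarrow> (nat \<Rightarrow> 'm \<Rightarrow> 'm) \<Rightarrow> ('m \<Rightarrow> 'm) \<Rightarrow> ('m \<Rightarrow> 'm)
     \<Rightarrow> int \<Rightarrow> 'm \<Rightarrow> 'm" where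
  "dP n P d \<alpha> \<beta> j x =
     (if j \<le> -1 then
        (let N = nat (- j); l = N div n; i = N mod n in
          if i \<ge> 1 then sgn_app (P (i - 1)) (int (l * n)) (d i x)
          else sgn_app (P (n - 1)) (int ((l - 1) * n)) (\<beta> (\<alpha> x)))
      else mzero (cpx n P (j + 1)))"

definition restr :: "'a set \<Rightarrow> ('a \<Rightarrow> 'b) \<Rightarrow> 'a \<Rightarrow> 'b" where
  "restr A f = (\<lambda>x. if x \<in> A then f x else undefined)"

text \<open>Homogeneous elements of \<E> of degree i: families of Gamma-maps \<P>^j -> \<P>^(j+i)
  (extensional: undefined outside the carriers).\<close>
definition Ehom :: "nat \<Rightarrow> (nat \<Rightarrow> ('m,'g::ring_1) rmod) \<Rightarrow> int \<Rightarrow> (int \<Rightarrow> 'm \<Rightarrow> 'm) set" where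
  "Ehom n P i = {f. \<forall>j. module_hom (cpx n P j) (cpx n P (j + i)) (f j) \<and>
                      (\<forall>x. x \<notin> mcar (cpx n P j) \<longrightarrow> f j x = undefined)}"

definition ecomp :: "nat \<Rightarrow> (nat \<Rightarrow> ('m,'g) rmod) \<Rightarrow> int \<Rightarrow> (int \<Rightarrow> 'm \<Rightarrow> 'm) \<Rightarrow> (int \<Rightarrow> 'm \<Rightarrow> 'm)
     \<Rightarrow> int \<Rightarrow> 'm \<Rightarrow> 'm" where
  "ecomp n P i' f g = (\<lambda>j. restr (mcar (cpx n P j)) (\<lambda>x. f (j + i') (g j x)))"

definition eadd :: "nat \<Rightarrow> (nat \<Rightarrow> ('m,'g) rmod) \<Rightarrow> int \<Rightarrow> (int \<Rightarrow> 'm \<Rightarrow> 'm) \<Rightarrow> (int \<Rightarrow> 'm \<Rightarrow> 'm)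
     \<Rightarrow> int \<Rightarrow> 'm \<Rightarrow> 'm" where
  "eadd n P i f g = (\<lambda>j. restr (mcar (cpx n P j)) (\<lambda>x. madd (cpx n P (j + i)) (f j x) (g j x)))"

definition ezero :: "nat \<Rightarrow> (nat \<Rightarrow> ('m,'g) rmod) \<Rightarrow> int \<Rightarrow> int \<Rightarrow> 'm \<Rightarrow> 'm" where
  "ezero n P i = (\<lambda>j. restr (mcar (cpx n P j)) (\<lambda>x. mzero (cpx n P (j + i))))"

definition eneg :: "nat \<Rightarrow> (nat \<Rightarrow> ('m,'g) rmod) \<Rightarrow> int \<Rightarrow> (int \<Rightarrow> 'm \<Rightarrow> 'm) \<Rightarrow> int \<Rightarrow> 'm \<Rightarrow> 'm" where
  "eneg n P i f = (\<lambda>j. restr (mcar (cpx n P j)) (\<lambda>x. mneg (cpx n P (j + i)) (f j x)))"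

definition esmult :: "nat \<Rightarrow> (nat \<Rightarrow> ('m,'g) rmod) \<Rightarrow> ('k \<Rightarrow> 'g) \<Rightarrow> int \<Rightarrow> 'k
     \<Rightarrow> (int \<Rightarrow> 'm \<Rightarrow> 'm) \<Rightarrow> int \<Rightarrow> 'm \<Rightarrow> 'm" where
  "esmult n P \<iota> i c f = (\<lambda>j. restr (mcar (cpx n P j)) (\<lambda>x. mact (cpx n P (j + i)) (f j x) (\<iota> c)))"

definition esign :: "nat \<Rightarrow> (nat \<Rightarrow> ('m,'g) rmod) \<Rightarrow> int \<Rightarrow> int \<Rightarrow> (int \<Rightarrow> 'm \<Rightarrow> 'm) \<Rightarrow> int \<Rightarrow> 'm \<Rightarrow> 'm" where
  "esign n P i e f = (if even e then f else eneg n P i f)"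

definition dPe :: "nat \<Rightarrow> (nat \<Rightarrow> ('m,'g) rmod) \<Rightarrow> (nat \<Rightarrow> 'm \<Rightarrow> 'm) \<Rightarrow> ('m \<Rightarrow> 'm) \<Rightarrow> ('m \<Rightarrow> 'm)
     \<Rightarrow> int \<Rightarrow> 'm \<Rightarrow> 'm" where
  "dPe n P d \<alpha> \<beta> = (\<lambda>j. restr (mcar (cpx n P j)) (dP n P d \<alpha> \<beta> j))"

definition edelta :: "nat \<Rightarrow> (nat \<Rightarrow> ('m,'g) rmod) \<Rightarrow> (nat \<Rightarrow> 'm \<Rightarrow> 'm) \<Rightarrow> ('m \<Rightarrow> 'm) \<Rightarrow> ('m \<Rightarrow> 'm)
     \<Rightarrow> int \<Rightarrow> (int \<Rightarrow> 'm \<Rightarrow> 'm) \<Rightarrow> int \<Rightarrow> 'm \<Rightarrow> 'm" where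
  "edelta n P d \<alpha> \<beta> i f =
     eadd n P (i + 1) (ecomp n P i (dPe n P d \<alpha> \<beta>) f)
                      (esign n P (i + 1) (i + 1) (ecomp n P 1 f (dPe n P d \<alpha> \<beta>)))"

text \<open>sigma in \<E>^n: identity from the l-th copy of P_i to the (l-1)-th copy (l \<ge> 1), zero on copy 0\<close>
definition sigmaE :: "nat \<Rightarrow> (nat \<Rightarrow> ('m,'g) rmod) \<Rightarrow> int \<Rightarrow> 'm \<Rightarrow> 'm" where
  "sigmaE n P = (\<lambda>j. restr (mcar (cpx n P j))
                        (\<lambda>x. if j \<le> - int n then x else mzero (cpx n P (j + int n))))"

definition identE :: "nat \<Rightarrow> (nat \<Rightarrow> ('m,'g) rmod) \<Rightarrow> int \<Rightarrow> 'm \<Rightarrow> 'm" where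
  "identE n P = (\<lambda>j. restr (mcar (cpx n P j)) (\<lambda>x. x))"

definition sigE :: "nat \<Rightarrow> (nat \<Rightarrow> ('m,'g::ring_1) rmod) \<Rightarrow> int \<Rightarrow> (int \<Rightarrow> 'm \<Rightarrow> 'm) set" where
  "sigE n P i = {x \<in> Ehom n P i.
      ecomp n P i (sigmaE n P) x = esign n P (i + int n) (int n * i) (ecomp n P (int n) x (sigmaE n P))}"

definition msigE :: "nat \<Rightarrow> (nat \<Rightarrow> ('m,'g::ring_1) rmod) \<Rightarrow> int \<Rightarrow> (int \<Rightarrow> 'm \<Rightarrow> 'm) set" where
  "msigE n P i = {y \<in> Ehom n P i.
      ecomp n P i (sigmaE n P) y = esign n P (i + int n) (int n * (i + 1)) (ecomp n P (int n) y (sigmaE n P))}"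

type_synonym 'm Telem = "(int \<Rightarrow> 'm \<Rightarrow> 'm) \<times> (int \<Rightarrow> 'm \<Rightarrow> 'm)"

definition Tcar :: "nat \<Rightarrow> (nat \<Rightarrow> ('m,'g::ring_1) rmod) \<Rightarrow> int \<Rightarrow> 'm Telem set" where
  "Tcar n P j = {(x, y). x \<in> sigE n P j \<and> y \<in> msigE n P (j - int n + 1)}"

definition Tadd :: "nat \<Rightarrow> (nat \<Rightarrow> ('m,'g) rmod) \<Rightarrow> int \<Rightarrow> 'm Telem \<Rightarrow> 'm Telem \<Rightarrow> 'm Telem" where
  "Tadd n P j p q = (eadd n P j (fst p) (fst q), eadd n P (j - int n + 1) (snd p) (snd q))"

definition Tzero :: "nat \<Rightarrow> (nat \<Rightarrow> ('m,'g) rmod) \<Rightarrow> int \<Rightarrow> 'm Telem" where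
  "Tzero n P j = (ezero n P j, ezero n P (j - int n + 1))"

definition Tneg :: "nat \<Rightarrow> (nat \<Rightarrow> ('m,'g) rmod) \<Rightarrow> int \<Rightarrow> 'm Telem \<Rightarrow> 'm Telem" where
  "Tneg n P j p = (eneg n P j (fst p), eneg n P (j - int n + 1) (snd p))"

definition Tsmult :: "nat \<Rightarrow> (nat \<Rightarrow> ('m,'g) rmod) \<Rightarrow> ('k \<Rightarrow> 'g) \<Rightarrow> int \<Rightarrow> 'k \<Rightarrow> 'm Telem \<Rightarrow> 'm Telem" where
  "Tsmult n P \<iota> j c p = (esmult n P \<iota> j c (fst p), esmult n P \<iota> (j - int n + 1) c (snd p))"

text \<open>(x,y)\<cdot>(a,b) = (x o a, x o b + (-1)^(|a|(|sigma|+1)) y o a), with (x,y) of degree j, (a,b) of degree j'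
  (so |x| = j, |y| = j-n+1, |a| = j', |b| = j'-n+1).\<close>
definition Tmul :: "nat \<Rightarrow> (nat \<Rightarrow> ('m,'g) rmod) \<Rightarrow> int \<Rightarrow> int \<Rightarrow> 'm Telem \<Rightarrow> 'm Telem \<Rightarrow> 'm Telem" where
  "Tmul n P j j' p q =
     (ecomp n P j' (fst p) (fst q),
      eadd n P (j + j' - int n + 1)
        (ecomp n P (j' - int n + 1) (fst p) (snd q))
        (esign n P (j + j' - int n + 1) (j' * (int n + 1)) (ecomp n P j' (snd p) (fst q))))"

definition Tone :: "nat \<Rightarrow> (nat \<Rightarrow> ('m,'g) rmod) \<Rightarrow> 'm Telem" where
  "Tone n P = (identE n P, ezero n P (1 - int n))"

definition Tdif :: "nat \<Rightarrow> (nat \<Rightarrow> ('m,'g) rmod) \<Rightarrow> (nat \<Rightarrow> 'm \<Rightarrow> 'm) \<Rightarrow> ('m \<Rightarrow> 'm) \<Rightarrow> ('m \<Rightarrow> 'm)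
     \<Rightarrow> int \<Rightarrow> 'm Telem \<Rightarrow> 'm Telem" where
  "Tdif n P d \<alpha> \<beta> j p =
     (eadd n P (j + 1) (edelta n P d \<alpha> \<beta> j (fst p))
                       (esign n P (j + 1) (j + 1) (ecomp n P (int n) (snd p) (sigmaE n P))),
      edelta n P d \<alpha> \<beta> (j - int n + 1) (snd p))"

definition kvs :: "'a set \<Rightarrow> ('a \<Rightarrow> 'a \<Rightarrow> 'a) \<Rightarrow> 'a \<Rightarrow> ('a \<Rightarrow> 'a) \<Rightarrow> ('k::field \<Rightarrow> 'a \<Rightarrow> 'a) \<Rightarrow> bool" where
  "kvs V add z neg sm \<longleftrightarrow>
     z \<in> V \<and> (\<forall>a\<in>V. \<forall>b\<in>V. add a b \<in> V) \<and> (\<forall>a\<in>V. neg a \<in> V) \<and> (\<forall>c. \<forall>a\<in>V. sm c a \<in> V) \<and>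
     (\<forall>a\<in>V. \<forall>b\<in>V. \<forall>e\<in>V. add (add a b) e = add a (add b e)) \<and>
     (\<forall>a\<in>V. \<forall>b\<in>V. add a b = add b a) \<and>
     (\<forall>a\<in>V. add z a = a) \<and> (\<forall>a\<in>V. add (neg a) a = z) \<and>
     (\<forall>a\<in>V. sm 1 a = a) \<and> (\<forall>c c'. \<forall>a\<in>V. sm (c * c') a = sm c (sm c' a)) \<and>
     (\<forall>c. \<forall>a\<in>V. \<forall>b\<in>V. sm c (add a b) = add (sm c a) (sm c b)) \<and>
     (\<forall>c c'. \<forall>a\<in>V. sm (c + c') a = add (sm c a) (sm c' a))"

definition gsign :: "('a \<Rightarrow> 'a) \<Rightarrow> int \<Rightarrow> 'a \<Rightarrow> 'a" where
  "gsign neg e a = (if even e then a else neg a)"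

definition dg_algebra :: "(int \<Rightarrow> 'a set) \<Rightarrow> (int \<Rightarrow> 'a \<Rightarrow> 'a \<Rightarrow> 'a) \<Rightarrow> (int \<Rightarrow> 'a) \<Rightarrow> (int \<Rightarrow> 'a \<Rightarrow> 'a)
     \<Rightarrow> (int \<Rightarrow> 'k::field \<Rightarrow> 'a \<Rightarrow> 'a) \<Rightarrow> (int \<Rightarrow> int \<Rightarrow> 'a \<Rightarrow> 'a \<Rightarrow> 'a) \<Rightarrow> 'a \<Rightarrow> (int \<Rightarrow> 'a \<Rightarrow> 'a) \<Rightarrow> bool" where
  "dg_algebra V add z neg sm mul one dif \<longleftrightarrow>
     (\<forall>i. kvs (V i) (add i) (z i) (neg i) (sm i)) \<and>
     \<comment> \<open>graded, bilinear, associative, unital multiplication\<close>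
     (\<forall>i j. \<forall>a\<in>V i. \<forall>b\<in>V j. mul i j a b \<in> V (i + j)) \<and>
     (\<forall>i j. \<forall>a\<in>V i. \<forall>a'\<in>V i. \<forall>b\<in>V j. mul i j (add i a a') b = add (i + j) (mul i j a b) (mul i j a' b)) \<and>
     (\<forall>i j. \<forall>a\<in>V i. \<forall>b\<in>V j. \<forall>b'\<in>V j. mul i j a (add j b b') = add (i + j) (mul i j a b) (mul i j a b')) \<and>
     (\<forall>i j c. \<forall>a\<in>V i. \<forall>b\<in>V j. mul i j (sm i c a) b = sm (i + j) c (mul i j a b)) \<and>
     (\<forall>i j c. \<forall>a\<in>V i. \<forall>b\<in>V j. mul i j a (sm j c b) = sm (i + j) c (mul i j a b)) \<and>
     (\<forall>i j l. \<forall>a\<in>V i. \<forall>b\<in>V j. \<forall>e\<in>V l. mul (i + j) l (mul i j a b) e = mul i (j + l) a (mul j l b e)) \<and>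
     one \<in> V 0 \<and>
     (\<forall>i. \<forall>a\<in>V i. mul 0 i one a = a \<and> mul i 0 a one = a) \<and>
     \<comment> \<open>differential: linear of degree 1, square zero, graded Leibniz rule\<close>
     (\<forall>i. \<forall>a\<in>V i. dif i a \<in> V (i + 1)) \<and>
     (\<forall>i. \<forall>a\<in>V i. \<forall>b\<in>V i. dif i (add i a b) = add (i + 1) (dif i a) (dif i b)) \<and>
     (\<forall>i c. \<forall>a\<in>V i. dif i (sm i c a) = sm (i + 1) c (dif i a)) \<and>
     (\<forall>i. \<forall>a\<in>V i. dif (i + 1) (dif i a) = z (i + 2)) \<and>
     (\<forall>i j. \<forall>a\<in>V i. \<forall>b\<in>V j.
        dif (i + j) (mul i j a b) =
          add (i + j + 1) (mul (i + 1) j (dif i a) b) (gsign (neg (i + j + 1)) i (mul i (j + 1) a (dif j b))))"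

end

theory Submission
  imports Defs
begin

locale agrp =
  fixes S :: "'a set" and ad :: "'a \<Rightarrow> 'a \<Rightarrow> 'a" and z :: 'a and ng :: "'a \<Rightarrow> 'a"
  assumes z_in[simp]: "z \<in> S"
    and ad_in[simp]: "a \<in> S \<Longrightarrow> b \<in> S \<Longrightarrow> ad a b \<in> S"
    and ng_in[simp]: "a \<in> S \<Longrightarrow> ng a \<in> S"
    and assoc: "a \<in> S \<Longrightarrow> b \<in> S \<Longrightarrow> c \<in> S \<Longrightarrow> ad (ad a b) c = ad a (ad b c)"
    and comm: "a \<in> S \<Longrightarrow> b \<in> S \<Longrightarrow> ad a b = ad b a"
    and zl[simp]: "a \<in> S \<Longrightarrow> ad z a = a"
    and ngl[simp]: "a \<in> S \<Longrightarrow> ad (ng a) a = z"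
begin

lemma zr[simp]: "a \<in> S \<Longrightarrow> ad a z = a"
  using comm zl by simp

lemma ngr[simp]: "a \<in> S \<Longrightarrow> ad a (ng a) = z"
  using comm ngl ng_in by metis

lemma lcomm: "a \<in> S \<Longrightarrow> b \<in> S \<Longrightarrow> c \<in> S \<Longrightarrow> ad a (ad b c) = ad b (ad a c)"
  by (metis assoc comm)

lemma ngl2[simp]: "a \<in> S \<Longrightarrow> b \<in> S \<Longrightarrow> ad (ng a) (ad a b) = b"
  by (simp add: assoc[symmetric])

lemma cancel_l: assumes "a \<in> S" "b \<in> S" "c \<in> S" "ad a b = ad a c" shows "b = c"
proof -
  have "ad (ng a) (ad a b) = ad (ng a) (ad a c)" using assms by simp
  then show ?thesis using assms(1-3) by simp
qed

lemma ngr2[simp]: "a \<in> S \<Longrightarrow> b \<in> S \<Longrightarrow> ad a (ad (ng a) b) = b"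
  by (simp add: assoc[symmetric])

lemma ng_unique: "a \<in> S \<Longrightarrow> b \<in> S \<Longrightarrow> ad a b = z \<Longrightarrow> b = ng a"
  by (metis cancel_l ng_in ngr)

lemma ng_ng[simp]: "a \<in> S \<Longrightarrow> ng (ng a) = a"
  by (metis ng_in ng_unique ngl)

lemma ng_z[simp]: "ng z = z"
  by (metis ng_unique z_in zl)

lemma ng_ad: "a \<in> S \<Longrightarrow> b \<in> S \<Longrightarrow> ng (ad a b) = ad (ng a) (ng b)"
proof -
  assume a: "a \<in> S" "b \<in> S"
  have "ad (ad a b) (ad (ng a) (ng b)) = z"
    using a by (metis ad_in assoc lcomm ng_in ngr zr)
  then show ?thesis using a by (metis ad_in ng_in ng_unique)
qed

lemma gsign_in[simp]: "a \<in> S \<Longrightarrow> gsign ng e a \<in> S"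
  by (simp add: gsign_def)

lemma gsign_even[simp]: "even e \<Longrightarrow> gsign ng e a = a"
  by (simp add: gsign_def)

lemma gsign_odd[simp]: "odd e \<Longrightarrow> gsign ng e a = ng a"
  by (simp add: gsign_def)

lemma gsign_ad: "a \<in> S \<Longrightarrow> b \<in> S \<Longrightarrow> gsign ng e (ad a b) = ad (gsign ng e a) (gsign ng e b)"
  by (simp add: gsign_def ng_ad)

lemma gsign_gsign: "a \<in> S \<Longrightarrow> gsign ng e (gsign ng e' a) = gsign ng (e + e') a"
  by (simp add: gsign_def)

lemma gsign_z[simp]: "gsign ng e z = z"
  by (simp add: gsign_def)

lemma gsign_ng: "a \<in> S \<Longrightarrow> gsign ng e (ng a) = gsign ng (e + 1) a"
  by (simp add: gsign_def)

lemma gsign_cong: "even (e - e') \<Longrightarrow> gsign ng e a = gsign ng e' a"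
  by (auto simp add: gsign_def)

lemma gsign_cancel: "a \<in> S \<Longrightarrow> odd (e - e') \<Longrightarrow> ad (gsign ng e a) (gsign ng e' a) = z"
  by (cases "even e") (auto simp add: gsign_def)

end


lemma rm_agrp: "right_module M \<Longrightarrow> agrp (mcar M) (madd M) (mzero M) (mneg M)"
  unfolding right_module_def agrp_def by auto

lemma rm_act_in[simp]: "right_module M \<Longrightarrow> x \<in> mcar M \<Longrightarrow> mact M x a \<in> mcar M"
  unfolding right_module_def by blast

lemma rm_act_add: "right_module M \<Longrightarrow> x \<in> mcar M \<Longrightarrow> y \<in> mcar M \<Longrightarrow>
   mact M (madd M x y) a = madd M (mact M x a) (mact M y a)"
  unfolding right_module_def by blast

lemma rm_act_mult: "right_module M \<Longrightarrow> x \<in> mcar M \<Longrightarrow> mact M x (a * b) = mact M (mact M x a) b"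
  unfolding right_module_def by blast

lemma rm_act_one: "right_module M \<Longrightarrow> x \<in> mcar M \<Longrightarrow> mact M x 1 = x"
  unfolding right_module_def by blast

lemma rm_act_plus: "right_module M \<Longrightarrow> x \<in> mcar M \<Longrightarrow> mact M x (a + b) = madd M (mact M x a) (mact M x b)"
  unfolding right_module_def by blast

lemma rm_act_z: assumes "right_module M" shows "mact M (mzero M) a = mzero M"
proof -
  interpret agrp "mcar M" "madd M" "mzero M" "mneg M" using rm_agrp[OF assms] .
  have "mact M (mzero M) a = madd M (mact M (mzero M) a) (mact M (mzero M) a)"
    using rm_act_add[OF assms, of "mzero M" "mzero M" a] by simp
  then have "madd M (mact M (mzero M) a) (mzero M) = madd M (mact M (mzero M) a) (mact M (mzero M) a)"
    using assms by simp
  then show ?thesis using cancel_l assms by (metis rm_act_in z_in)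
qed

lemma rm_act_ng: assumes "right_module M" "x \<in> mcar M"
  shows "mact M (mneg M x) a = mneg M (mact M x a)"
proof -
  interpret agrp "mcar M" "madd M" "mzero M" "mneg M" using rm_agrp[OF assms(1)] .
  have "madd M (mact M x a) (mact M (mneg M x) a) = mzero M"
    using rm_act_add[OF assms(1), of x "mneg M x" a] assms rm_act_z[OF assms(1)] by simp
  then show ?thesis using ng_unique assms by simp
qed

lemma rm_act_gsign: assumes "right_module M" "x \<in> mcar M"
  shows "mact M (gsign (mneg M) e x) a = gsign (mneg M) e (mact M x a)"
  using rm_act_ng[OF assms] by (simp add: gsign_def)

lemma hom_in: "module_hom M N f \<Longrightarrow> x \<in> mcar M \<Longrightarrow> f x \<in> mcar N"
  unfolding module_hom_def by blast

lemma hom_add: "module_hom M N f \<Longrightarrow> x \<in> mcar M \<Longrightarrow> y \<in> mcar M \<Longrightarrow> f (madd M x y) = madd N (f x) (f y)"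
  unfolding module_hom_def by blast

lemma hom_act: "module_hom M N f \<Longrightarrow> x \<in> mcar M \<Longrightarrow> f (mact M x a) = mact N (f x) a"
  unfolding module_hom_def by blast

lemma hom_z: assumes "right_module M" "right_module N" "module_hom M N f"
  shows "f (mzero M) = mzero N"
proof -
  interpret M: agrp "mcar M" "madd M" "mzero M" "mneg M" using rm_agrp[OF assms(1)] .
  interpret N: agrp "mcar N" "madd N" "mzero N" "mneg N" using rm_agrp[OF assms(2)] .
  have "f (mzero M) = madd N (f (mzero M)) (f (mzero M))"
    using hom_add[OF assms(3), of "mzero M" "mzero M"] by simp
  then show ?thesis using N.cancel_l hom_in[OF assms(3)] by (metis M.z_in N.z_in N.zr)
qed

lemma hom_ng: assumes "right_module M" "right_module N" "module_hom M N f" "x \<in> mcar M"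
  shows "f (mneg M x) = mneg N (f x)"
proof -
  interpret M: agrp "mcar M" "madd M" "mzero M" "mneg M" using rm_agrp[OF assms(1)] .
  interpret N: agrp "mcar N" "madd N" "mzero N" "mneg N" using rm_agrp[OF assms(2)] .
  have "madd N (f x) (f (mneg M x)) = mzero N"
    using hom_add[OF assms(3), of x "mneg M x"] hom_z[OF assms(1-3)] assms(4) by simp
  then show ?thesis using N.ng_unique hom_in[OF assms(3)] assms(4) by simp
qed

lemma hom_gsign: assumes "right_module M" "right_module N" "module_hom M N f" "x \<in> mcar M"
  shows "f (gsign (mneg M) e x) = gsign (mneg N) e (f x)"
  using hom_ng[OF assms] by (simp add: gsign_def)

lemma zero_mod_rm: "right_module (zero_mod Q)"
  unfolding right_module_def zero_mod_def by simp


lemma restr_app[simp]: "x \<in> A \<Longrightarrow> restr A f x = f x"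
  by (simp add: restr_def)

lemma restr_out[simp]: "x \<notin> A \<Longrightarrow> restr A f x = undefined"
  by (simp add: restr_def)

lemma hom_restr: "right_module A \<Longrightarrow> module_hom A B (restr (mcar A) h) = module_hom A B h"
  unfolding module_hom_def right_module_def by (auto simp: restr_def)

lemma hom_comp: "module_hom A B f \<Longrightarrow> module_hom B C g \<Longrightarrow> module_hom A C (\<lambda>x. g (f x))"
  unfolding module_hom_def by auto

locale ctx =
  fixes \<iota> :: "'k::field \<Rightarrow> 'g::ring_1"
    and n :: nat
    and P :: "nat \<Rightarrow> ('m,'g) rmod"
    and d :: "nat \<Rightarrow> 'm \<Rightarrow> 'm"
    and M :: "('m,'g) rmod"
    and \<alpha> \<beta> :: "'m \<Rightarrow> 'm"
  assumes kalg: "k_algebra \<iota>"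
    and n1: "n \<ge> 1"
    and Mmod: "right_module M"
    and Pmod: "\<forall>i<n. right_module (P i) \<and> fg_projective (P i)"
    and dhom: "\<forall>i. 1 \<le> i \<and> i < n \<longrightarrow> module_hom (P i) (P (i - 1)) (d i)"
    and ahom: "module_hom (P 0) M \<alpha>"
    and bhom: "module_hom M (P (n - 1)) \<beta>"
    and exact: "exact_seq n P d M \<alpha> \<beta>"
begin

abbreviation C where "C j \<equiv> cpx n P j"
abbreviation E where "E i \<equiv> Ehom n P i"

lemma Pm: "i < n \<Longrightarrow> right_module (P i)"
  using Pmod by blast

lemma Cmod[simp]: "right_module (C j)"
  using Pm n1 by (simp add: cpx_def zero_mod_rm)

lemma Cgrp: "agrp (mcar (C j)) (madd (C j)) (mzero (C j)) (mneg (C j))"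
  by (rule rm_agrp[OF Cmod])

lemmas C_z_in[simp] = agrp.z_in[OF Cgrp]
lemmas C_ad_in[simp] = agrp.ad_in[OF Cgrp]
lemmas C_ng_in[simp] = agrp.ng_in[OF Cgrp]
lemmas C_zl[simp] = agrp.zl[OF Cgrp]
lemmas C_zr[simp] = agrp.zr[OF Cgrp]
lemmas C_ng_ng[simp] = agrp.ng_ng[OF Cgrp]
lemmas C_ng_z[simp] = agrp.ng_z[OF Cgrp]
lemmas C_gsign_in[simp] = agrp.gsign_in[OF Cgrp]
lemmas C_gsign_z[simp] = agrp.gsign_z[OF Cgrp]
lemmas C_act_in[simp] = rm_act_in[OF Cmod]

lemma kal: "\<iota> 1 = 1" "\<iota> (a + b) = \<iota> a + \<iota> b" "\<iota> (a * b) = \<iota> a * \<iota> b" "\<iota> a * g = g * \<iota> a"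
  using kalg unfolding k_algebra_def by blast+

lemma ecomp_app[simp]: "x \<in> mcar (C j) \<Longrightarrow> ecomp n P i f g j x = f (j + i) (g j x)"
  by (simp add: ecomp_def)
lemma eadd_app[simp]: "x \<in> mcar (C j) \<Longrightarrow> eadd n P i f g j x = madd (C (j + i)) (f j x) (g j x)"
  by (simp add: eadd_def)
lemma eneg_app[simp]: "x \<in> mcar (C j) \<Longrightarrow> eneg n P i f j x = mneg (C (j + i)) (f j x)"
  by (simp add: eneg_def)
lemma ezero_app[simp]: "x \<in> mcar (C j) \<Longrightarrow> ezero n P i j x = mzero (C (j + i))"
  by (simp add: ezero_def)
lemma esmult_app[simp]: "x \<in> mcar (C j) \<Longrightarrow> esmult n P \<iota> i c f j x = mact (C (j + i)) (f j x) (\<iota> c)"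
  by (simp add: esmult_def)
lemma esign_app[simp]: "x \<in> mcar (C j) \<Longrightarrow> esign n P i e f j x = gsign (mneg (C (j + i))) e (f j x)"
  by (simp add: esign_def gsign_def)
lemma identE_app[simp]: "x \<in> mcar (C j) \<Longrightarrow> identE n P j x = x"
  by (simp add: identE_def)

lemma E_I: "(\<And>j. module_hom (C j) (C (j + i)) (f j)) \<Longrightarrow> (\<And>j x. x \<notin> mcar (C j) \<Longrightarrow> f j x = undefined) \<Longrightarrow> f \<in> E i"
  by (simp add: Ehom_def)

lemma E_hom: "f \<in> E i \<Longrightarrow> module_hom (C j) (C (j + i)) (f j)"
  by (simp add: Ehom_def)

lemma E_out: "f \<in> E i \<Longrightarrow> x \<notin> mcar (C j) \<Longrightarrow> f j x = undefined"
  by (simp add: Ehom_def)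

lemma E_in: "f \<in> E i \<Longrightarrow> x \<in> mcar (C j) \<Longrightarrow> f j x \<in> mcar (C (j + i))"
  by (rule hom_in[OF E_hom])

lemma E_ad: "f \<in> E i \<Longrightarrow> x \<in> mcar (C j) \<Longrightarrow> y \<in> mcar (C j) \<Longrightarrow>
   f j (madd (C j) x y) = madd (C (j + i)) (f j x) (f j y)"
  by (rule hom_add[OF E_hom])

lemma E_act: "f \<in> E i \<Longrightarrow> x \<in> mcar (C j) \<Longrightarrow> f j (mact (C j) x a) = mact (C (j + i)) (f j x) a"
  by (rule hom_act[OF E_hom])

lemma E_z: "f \<in> E i \<Longrightarrow> f j (mzero (C j)) = mzero (C (j + i))"
  by (rule hom_z[OF Cmod Cmod E_hom])

lemma E_ng: "f \<in> E i \<Longrightarrow> x \<in> mcar (C j) \<Longrightarrow> f j (mneg (C j) x) = mneg (C (j + i)) (f j x)"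
  by (rule hom_ng[OF Cmod Cmod E_hom])

lemma E_gsign: "f \<in> E i \<Longrightarrow> x \<in> mcar (C j) \<Longrightarrow> f j (gsign (mneg (C j)) e x) = gsign (mneg (C (j + i))) e (f j x)"
  by (rule hom_gsign[OF Cmod Cmod E_hom])

lemma E_ext: "f \<in> E i \<Longrightarrow> g \<in> E i \<Longrightarrow> (\<And>j x. x \<in> mcar (C j) \<Longrightarrow> f j x = g j x) \<Longrightarrow> f = g"
proof (rule ext, rule ext)
  fix j x
  assume f: "f \<in> E i" and g: "g \<in> E i" and h: "\<And>j x. x \<in> mcar (C j) \<Longrightarrow> f j x = g j x"
  show "f j x = g j x"
    by (cases "x \<in> mcar (C j)") (simp_all add: h E_out[OF f] E_out[OF g])
qed

lemma E_restrI:
  assumes "\<And>j. module_hom (C j) (C (j + i)) (h j)"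
  shows "(\<lambda>j. restr (mcar (C j)) (h j)) \<in> E i"
  using assms by (intro E_I) (simp_all add: hom_restr)

lemma ecomp_E:
  assumes f: "f \<in> E a" and g: "g \<in> E b" and k: "k = a + b"
  shows "ecomp n P b f g \<in> E k"
  unfolding ecomp_def
proof (rule E_restrI)
  fix j
  have "module_hom (C j) (C (j + b + a)) (\<lambda>x. f (j + b) (g j x))"
    by (rule hom_comp[OF E_hom[OF g] E_hom[OF f]])
  moreover have "j + b + a = j + k" using k by simp
  ultimately show "module_hom (C j) (C (j + k)) (\<lambda>x. f (j + b) (g j x))" by simp
qed

lemma eadd_E: assumes f: "f \<in> E i" and g: "g \<in> E i" shows "eadd n P i f g \<in> E i"
  unfolding eadd_def
proof (rule E_restrI)
  fix j
  interpret T: agrp "mcar (C (j+i))" "madd (C (j+i))" "mzero (C (j+i))" "mneg (C (j+i))" by (rule Cgrp)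
  show "module_hom (C j) (C (j + i)) (\<lambda>x. madd (C (j + i)) (f j x) (g j x))"
    unfolding module_hom_def
    using f g by (auto simp: E_ad E_act rm_act_add T.assoc T.lcomm E_in[OF f] E_in[OF g])
qed

lemma eneg_E: assumes f: "f \<in> E i" shows "eneg n P i f \<in> E i"
  unfolding eneg_def
proof (rule E_restrI)
  fix j
  interpret T: agrp "mcar (C (j+i))" "madd (C (j+i))" "mzero (C (j+i))" "mneg (C (j+i))" by (rule Cgrp)
  show "module_hom (C j) (C (j + i)) (\<lambda>x. mneg (C (j + i)) (f j x))"
    unfolding module_hom_def
    using f by (auto simp: E_ad E_act rm_act_ng T.ng_ad E_in[OF f])
qed

lemma ezero_E: "ezero n P i \<in> E i"
  unfolding ezero_def
proof (rule E_restrI)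
  fix j
  show "module_hom (C j) (C (j + i)) (\<lambda>x. mzero (C (j + i)))"
    unfolding module_hom_def by (auto simp: rm_act_z)
qed

lemma esmult_E: assumes f: "f \<in> E i" shows "esmult n P \<iota> i c f \<in> E i"
  unfolding esmult_def
proof (rule E_restrI)
  fix j
  show "module_hom (C j) (C (j + i)) (\<lambda>x. mact (C (j + i)) (f j x) (\<iota> c))"
    unfolding module_hom_def
    using f by (auto simp: E_ad E_act rm_act_add rm_act_mult[symmetric] E_in[OF f] kal(4)[of c])
qed

lemma esign_E: "f \<in> E i \<Longrightarrow> esign n P i e f \<in> E i"
  by (simp add: esign_def eneg_E)

lemma identE_E: "identE n P \<in> E 0"
  unfolding identE_def by (rule E_restrI) (simp add: module_hom_def)

end


context ctx
begin

lemma kal_comm: "\<iota> c * \<iota> c' = \<iota> c' * \<iota> c"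
  by (rule kal(4))

lemma esign_gs: "esign n P k e f = gsign (eneg n P k) e f"
  by (simp add: esign_def gsign_def)

lemma Egrp: "agrp (E k) (eadd n P k) (ezero n P k) (eneg n P k)"
proof -
  interpret T: agrp "mcar (C (j+k))" "madd (C (j+k))" "mzero (C (j+k))" "mneg (C (j+k))" for j by (rule Cgrp)
  show ?thesis
  proof
    show "ezero n P k \<in> E k" by (rule ezero_E)
    show "\<And>a b. a \<in> E k \<Longrightarrow> b \<in> E k \<Longrightarrow> eadd n P k a b \<in> E k" by (rule eadd_E)
    show "\<And>a. a \<in> E k \<Longrightarrow> eneg n P k a \<in> E k" by (rule eneg_E)
    show "\<And>a b c. a \<in> E k \<Longrightarrow> b \<in> E k \<Longrightarrow> c \<in> E k \<Longrightarrow>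
        eadd n P k (eadd n P k a b) c = eadd n P k a (eadd n P k b c)"
      by (rule E_ext) (auto intro!: eadd_E simp: E_in T.assoc)
    show "\<And>a b. a \<in> E k \<Longrightarrow> b \<in> E k \<Longrightarrow> eadd n P k a b = eadd n P k b a"
      by (rule E_ext) (auto intro!: eadd_E simp: E_in T.comm)
    show "\<And>a. a \<in> E k \<Longrightarrow> eadd n P k (ezero n P k) a = a"
      by (rule E_ext) (auto intro!: eadd_E ezero_E simp: E_in)
    show "\<And>a. a \<in> E k \<Longrightarrow> eadd n P k (eneg n P k a) a = ezero n P k"
      by (rule E_ext) (auto intro!: eadd_E ezero_E eneg_E simp: E_in)
  qed
qed

lemma Ekvs: "kvs (E k) (eadd n P k) (ezero n P k) (eneg n P k) (esmult n P \<iota> k)"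
proof -
  interpret G: agrp "E k" "eadd n P k" "ezero n P k" "eneg n P k" by (rule Egrp)
  have sm1: "\<And>a. a \<in> E k \<Longrightarrow> esmult n P \<iota> k 1 a = a"
    by (rule E_ext) (auto intro!: esmult_E simp: E_in kal(1-3) rm_act_one)
  have sm2: "\<And>c c' a. a \<in> E k \<Longrightarrow> esmult n P \<iota> k (c * c') a = esmult n P \<iota> k c (esmult n P \<iota> k c' a)"
    by (rule E_ext) (auto intro!: esmult_E simp: E_in kal(1-3) rm_act_mult[symmetric] kal_comm)
  have sm3: "\<And>c a b. a \<in> E k \<Longrightarrow> b \<in> E k \<Longrightarrow> esmult n P \<iota> k c (eadd n P k a b) =
       eadd n P k (esmult n P \<iota> k c a) (esmult n P \<iota> k c b)"
    by (rule E_ext) (auto intro!: esmult_E eadd_E simp: E_in rm_act_add)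
  have sm4: "\<And>c c' a. a \<in> E k \<Longrightarrow> esmult n P \<iota> k (c + c') a =
       eadd n P k (esmult n P \<iota> k c a) (esmult n P \<iota> k c' a)"
    by (rule E_ext) (auto intro!: esmult_E eadd_E simp: E_in kal(1-3) rm_act_plus)
  show ?thesis unfolding kvs_def
    using sm1 sm2 sm3 sm4 G.assoc G.comm esmult_E by auto
qed

lemmas E_ad_in[simp] = agrp.ad_in[OF Egrp]
lemmas E_ng_in[simp] = agrp.ng_in[OF Egrp]
lemmas E_z_in[simp] = agrp.z_in[OF Egrp]

lemma E_es_in[simp]: "f \<in> E k \<Longrightarrow> esign n P k e f \<in> E k"
  by (rule esign_E)

lemma E_sm_in[simp]: "f \<in> E k \<Longrightarrow> esmult n P \<iota> k c f \<in> E k"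
  by (rule esmult_E)

lemma E_es_ad: "f \<in> E k \<Longrightarrow> g \<in> E k \<Longrightarrow> esign n P k e (eadd n P k f g) = eadd n P k (esign n P k e f) (esign n P k e g)"
  unfolding esign_gs by (rule agrp.gsign_ad[OF Egrp])

lemma E_es_es: "f \<in> E k \<Longrightarrow> esign n P k e (esign n P k e' f) = esign n P k (e + e') f"
  unfolding esign_gs by (rule agrp.gsign_gsign[OF Egrp])

lemma E_es_cong: "even (e - e') \<Longrightarrow> esign n P k e f = esign n P k e' f"
  unfolding esign_gs by (rule agrp.gsign_cong[OF Egrp])

lemma E_es_z[simp]: "esign n P k e (ezero n P k) = ezero n P k"
  unfolding esign_gs by (rule agrp.gsign_z[OF Egrp])

lemma E_es_even[simp]: "even e \<Longrightarrow> esign n P k e f = f"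
  by (simp add: esign_def)

lemma E_es_sm: "f \<in> E k \<Longrightarrow> esign n P k e (esmult n P \<iota> k c f) = esmult n P \<iota> k c (esign n P k e f)"
  by (rule E_ext[where i=k]) (auto simp: E_in rm_act_gsign)

lemma E_ad_sm: "f \<in> E k \<Longrightarrow> g \<in> E k \<Longrightarrow>
   esmult n P \<iota> k c (eadd n P k f g) = eadd n P k (esmult n P \<iota> k c f) (esmult n P \<iota> k c g)"
  using Ekvs unfolding kvs_def by blast

lemma E_cancel: "f \<in> E k \<Longrightarrow> odd (e - e') \<Longrightarrow> eadd n P k (esign n P k e f) (esign n P k e' f) = ezero n P k"
  unfolding esign_gs by (rule agrp.gsign_cancel[OF Egrp])

lemma cp_assoc:
  assumes f: "f \<in> E a" and g: "g \<in> E b" and h: "h \<in> E c" and bc: "bc = b + c"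
  shows "ecomp n P c (ecomp n P b f g) h = ecomp n P bc f (ecomp n P c g h)"
proof (rule E_ext)
  show "ecomp n P c (ecomp n P b f g) h \<in> E (a + b + c)"
    by (rule ecomp_E[OF ecomp_E[OF f g refl] h refl])
  show "ecomp n P bc f (ecomp n P c g h) \<in> E (a + b + c)"
    by (rule ecomp_E[OF f ecomp_E[OF g h bc]]) (simp add: bc)
  fix j x assume x: "x \<in> mcar (C j)"
  show "ecomp n P c (ecomp n P b f g) h j x = ecomp n P bc f (ecomp n P c g h) j x"
    using x E_in[OF h x] by (simp add: bc ac_simps)
qed

lemma cp_ad_l:
  assumes f: "f \<in> E a" and f': "f' \<in> E a" and g: "g \<in> E b" and k: "k = a + b"
  shows "ecomp n P b (eadd n P a f f') g = eadd n P k (ecomp n P b f g) (ecomp n P b f' g)"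
proof (rule E_ext)
  show "ecomp n P b (eadd n P a f f') g \<in> E k" by (rule ecomp_E[OF _ g k]) (simp add: f f')
  show "eadd n P k (ecomp n P b f g) (ecomp n P b f' g) \<in> E k"
    by (intro E_ad_in ecomp_E[OF f g k] ecomp_E[OF f' g k])
  fix j x assume x: "x \<in> mcar (C j)"
  show "ecomp n P b (eadd n P a f f') g j x = eadd n P k (ecomp n P b f g) (ecomp n P b f' g) j x"
    using x E_in[OF g x] by (simp add: k ac_simps)
qed

lemma cp_ad_r:
  assumes f: "f \<in> E a" and g: "g \<in> E b" and g': "g' \<in> E b" and k: "k = a + b"
  shows "ecomp n P b f (eadd n P b g g') = eadd n P k (ecomp n P b f g) (ecomp n P b f g')"
proof (rule E_ext)
  show "ecomp n P b f (eadd n P b g g') \<in> E k" by (rule ecomp_E[OF f _ k]) (simp add: g g')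
  show "eadd n P k (ecomp n P b f g) (ecomp n P b f g') \<in> E k"
    by (intro E_ad_in ecomp_E[OF f g k] ecomp_E[OF f g' k])
  fix j x assume x: "x \<in> mcar (C j)"
  show "ecomp n P b f (eadd n P b g g') j x = eadd n P k (ecomp n P b f g) (ecomp n P b f g') j x"
    using x E_in[OF g x] E_in[OF g' x] by (simp add: k ac_simps E_ad[OF f])
qed

lemma cp_es_l:
  assumes f: "f \<in> E a" and g: "g \<in> E b" and k: "k = a + b"
  shows "ecomp n P b (esign n P a e f) g = esign n P k e (ecomp n P b f g)"
proof (rule E_ext)
  show "ecomp n P b (esign n P a e f) g \<in> E k" by (rule ecomp_E[OF _ g k]) (simp add: f)
  show "esign n P k e (ecomp n P b f g) \<in> E k"
    by (intro E_es_in ecomp_E[OF f g k])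
  fix j x assume x: "x \<in> mcar (C j)"
  show "ecomp n P b (esign n P a e f) g j x = esign n P k e (ecomp n P b f g) j x"
    using x E_in[OF g x] by (simp add: k ac_simps)
qed

lemma cp_es_r:
  assumes f: "f \<in> E a" and g: "g \<in> E b" and k: "k = a + b"
  shows "ecomp n P b f (esign n P b e g) = esign n P k e (ecomp n P b f g)"
proof (rule E_ext)
  show "ecomp n P b f (esign n P b e g) \<in> E k" by (rule ecomp_E[OF f _ k]) (simp add: g)
  show "esign n P k e (ecomp n P b f g) \<in> E k"
    by (intro E_es_in ecomp_E[OF f g k])
  fix j x assume x: "x \<in> mcar (C j)"
  show "ecomp n P b f (esign n P b e g) j x = esign n P k e (ecomp n P b f g) j x"
    using x E_in[OF g x] by (simp add: k ac_simps E_gsign[OF f])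
qed

lemma cp_sm_l:
  assumes f: "f \<in> E a" and g: "g \<in> E b" and k: "k = a + b"
  shows "ecomp n P b (esmult n P \<iota> a c f) g = esmult n P \<iota> k c (ecomp n P b f g)"
proof (rule E_ext)
  show "ecomp n P b (esmult n P \<iota> a c f) g \<in> E k" by (rule ecomp_E[OF _ g k]) (simp add: f)
  show "esmult n P \<iota> k c (ecomp n P b f g) \<in> E k"
    by (intro E_sm_in ecomp_E[OF f g k])
  fix j x assume x: "x \<in> mcar (C j)"
  show "ecomp n P b (esmult n P \<iota> a c f) g j x = esmult n P \<iota> k c (ecomp n P b f g) j x"
    using x E_in[OF g x] by (simp add: k ac_simps)
qed

lemma cp_sm_r:
  assumes f: "f \<in> E a" and g: "g \<in> E b" and k: "k = a + b"
  shows "ecomp n P b f (esmult n P \<iota> b c g) = esmult n P \<iota> k c (ecomp n P b f g)"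
proof (rule E_ext)
  show "ecomp n P b f (esmult n P \<iota> b c g) \<in> E k" by (rule ecomp_E[OF f _ k]) (simp add: g)
  show "esmult n P \<iota> k c (ecomp n P b f g) \<in> E k"
    by (intro E_sm_in ecomp_E[OF f g k])
  fix j x assume x: "x \<in> mcar (C j)"
  show "ecomp n P b f (esmult n P \<iota> b c g) j x = esmult n P \<iota> k c (ecomp n P b f g) j x"
    using x E_in[OF g x] by (simp add: k ac_simps E_act[OF f])
qed

lemma cp_z_l:
  assumes g: "g \<in> E b" and k: "k = a + b"
  shows "ecomp n P b (ezero n P a) g = ezero n P k"
proof (rule E_ext)
  show "ecomp n P b (ezero n P a) g \<in> E k" by (rule ecomp_E[OF _ g k]) simp
  show "ezero n P k \<in> E k" by simp
  fix j x assume x: "x \<in> mcar (C j)"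
  show "ecomp n P b (ezero n P a) g j x = ezero n P k j x"
    using x E_in[OF g x] by (simp add: k ac_simps)
qed

lemma cp_z_r:
  assumes f: "f \<in> E a" and k: "k = a + b"
  shows "ecomp n P b f (ezero n P b) = ezero n P k"
proof (rule E_ext)
  show "ecomp n P b f (ezero n P b) \<in> E k" by (rule ecomp_E[OF f _ k]) simp
  show "ezero n P k \<in> E k" by simp
  fix j x assume x: "x \<in> mcar (C j)"
  show "ecomp n P b f (ezero n P b) j x = ezero n P k j x"
    using x by (simp add: k ac_simps E_z[OF f])
qed

lemma cp_id_l: assumes g: "g \<in> E b" shows "ecomp n P b (identE n P) g = g"
proof (rule E_ext)
  show "ecomp n P b (identE n P) g \<in> E b" by (rule ecomp_E[OF identE_E g]) simp
  show "g \<in> E b" by (rule g)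
  fix j x assume x: "x \<in> mcar (C j)"
  show "ecomp n P b (identE n P) g j x = g j x"
    using x E_in[OF g x] by simp
qed

lemma cp_id_r: assumes f: "f \<in> E a" shows "ecomp n P 0 f (identE n P) = f"
proof (rule E_ext)
  show "ecomp n P 0 f (identE n P) \<in> E a" by (rule ecomp_E[OF f identE_E]) simp
  show "f \<in> E a" by (rule f)
  fix j x assume x: "x \<in> mcar (C j)"
  show "ecomp n P 0 f (identE n P) j x = f j x"
    using x by simp
qed

end


definition dN :: "nat \<Rightarrow> (nat \<Rightarrow> ('m,'g) rmod) \<Rightarrow> (nat \<Rightarrow> 'm \<Rightarrow> 'm) \<Rightarrow> ('m \<Rightarrow> 'm) \<Rightarrow> ('m \<Rightarrow> 'm) \<Rightarrow> nat \<Rightarrow> 'm \<Rightarrow> 'm" where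
  "dN n P d \<alpha> \<beta> N x = (if N mod n \<ge> 1 then gsign (mneg (P (N mod n - 1))) (int ((N div n) * n)) (d (N mod n) x)
        else gsign (mneg (P (n - 1))) (int ((N div n - 1) * n)) (\<beta> (\<alpha> x)))"

lemma mod_pred1: "(n::nat) \<ge> 1 \<Longrightarrow> N mod n \<ge> 1 \<Longrightarrow> (N - 1) mod n = N mod n - 1 \<and> (N - 1) div n = N div n"
proof -
  assume n: "n \<ge> 1" and r: "N mod n \<ge> 1"
  define q r' where "q = N div n" and "r' = N mod n"
  have N: "N = q * n + r'" by (simp add: q_def r'_def)
  have "r' < n" using n by (simp add: r'_def)
  have "N - 1 = q * n + (r' - 1)" using N r r'_def by simp
  moreover have "r' - 1 < n" using \<open>r' < n\<close> by simp
  ultimately show ?thesis using n by (simp add: r'_def q_def)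
qed

lemma dml1: "r < (n::nat) \<Longrightarrow> (a * n + r) mod n = r"
  by simp
lemma dml2: "r < (n::nat) \<Longrightarrow> (a * n + r) div n = a"
  by simp

lemma mod_pred0: "(n::nat) \<ge> 1 \<Longrightarrow> N \<ge> 1 \<Longrightarrow> N mod n = 0 \<Longrightarrow> (N - 1) mod n = n - 1 \<and> (N - 1) div n = N div n - 1 \<and> N div n \<ge> 1"
proof -
  assume n: "n \<ge> 1" and N1: "N \<ge> 1" and r: "N mod n = 0"
  define q where "q = N div n"
  have N: "N = q * n" using div_mult_mod_eq[of N n] r by (simp add: q_def)
  then have q: "q \<ge> 1" using N1 by (cases q) auto
  have e: "N - 1 = (q - 1) * n + (n - 1)" using N q n
    by (cases q) (auto simp: algebra_simps)
  have "(N - 1) mod n = n - 1" unfolding e by (rule dml1) (use n in simp)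
  moreover have "(N - 1) div n = q - 1" unfolding e by (rule dml2) (use n in simp)
  ultimately show ?thesis using q by (simp add: q_def)
qed

lemma mod_sub_n: "(n::nat) \<ge> 1 \<Longrightarrow> N \<ge> n \<Longrightarrow> (N - n) mod n = N mod n \<and> (N - n) div n = N div n - 1"
  using le_div_geq[of n N] le_mod_geq[of n N] by simp

context ctx
begin

lemma C_neg: "j \<le> 0 \<Longrightarrow> C j = P (nat (- j) mod n)"
  by (simp add: cpx_def)

lemma C_pos: "j > 0 \<Longrightarrow> C j = zero_mod (P 0)"
  by (simp add: cpx_def)

lemma gsign_hom: "right_module Q \<Longrightarrow> module_hom Q Q (gsign (mneg Q) e)"
  unfolding module_hom_def
  by (auto simp: agrp.gsign_ad[OF rm_agrp] rm_act_gsign agrp.gsign_in[OF rm_agrp])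

lemma dhom': "1 \<le> i \<Longrightarrow> i < n \<Longrightarrow> module_hom (P i) (P (i - 1)) (d i)"
  using dhom by blast

lemma dN_hom: assumes N: "N \<ge> 1" shows "module_hom (P (N mod n)) (P ((N - 1) mod n)) (dN n P d \<alpha> \<beta> N)"
proof (cases "N mod n \<ge> 1")
  case True
  have i: "N mod n < n" using n1 by simp
  have "module_hom (P (N mod n)) (P (N mod n - 1)) (\<lambda>x. gsign (mneg (P (N mod n - 1))) (int ((N div n) * n)) (d (N mod n) x))"
    by (rule hom_comp[OF dhom'[OF True i] gsign_hom[OF Pm]]) (use i in simp)
  then show ?thesis using True mod_pred1[OF n1 True] by (simp add: dN_def[abs_def])
next
  case False
  then have r: "N mod n = 0" by simp
  have "module_hom (P 0) (P (n - 1)) (\<lambda>x. gsign (mneg (P (n - 1))) (int ((N div n - 1) * n)) (\<beta> (\<alpha> x)))"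
    by (rule hom_comp[OF hom_comp[OF ahom bhom] gsign_hom[OF Pm]]) (use n1 in simp)
  then show ?thesis using r mod_pred0[OF n1 N r] by (simp add: dN_def[abs_def])
qed

lemma dP_neg: "j \<le> -1 \<Longrightarrow> dP n P d \<alpha> \<beta> j x = dN n P d \<alpha> \<beta> (nat (- j)) x"
  by (simp add: dP_def dN_def sgn_app_def gsign_def Let_def)

lemma dP_nonneg: "j \<ge> 0 \<Longrightarrow> dP n P d \<alpha> \<beta> j x = mzero (C (j + 1))"
  by (simp add: dP_def)

lemma D_hom: "module_hom (C j) (C (j + 1)) (dP n P d \<alpha> \<beta> j)"
proof (cases "j \<le> -1")
  case True
  then have N: "nat (- j) \<ge> 1" by simp
  have e1: "C j = P (nat (- j) mod n)" using True by (simp add: C_neg)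
  have e2: "C (j + 1) = P ((nat (- j) - 1) mod n)" using True
    by (simp add: C_neg nat_diff_distrib')
  have "dP n P d \<alpha> \<beta> j = dN n P d \<alpha> \<beta> (nat (- j))" by (rule ext) (simp add: dP_neg True)
  then show ?thesis using dN_hom[OF N] by (simp add: e1 e2)
next
  case False
  then show ?thesis unfolding module_hom_def
    by (auto simp: dP_nonneg rm_act_z)
qed

lemma D_E: "dPe n P d \<alpha> \<beta> \<in> E 1"
  unfolding dPe_def by (rule E_restrI) (rule D_hom)

lemma sigma_E: "sigmaE n P \<in> E (int n)"
  unfolding sigmaE_def
proof (rule E_restrI)
  fix j
  show "module_hom (C j) (C (j + int n)) (\<lambda>x. if j \<le> - int n then x else mzero (C (j + int n)))"
  proof (cases "j \<le> - int n")
    case True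
    have "nat (- (j + int n)) = nat (- j) - n" using True by simp
    then have "C (j + int n) = C j" using True n1
      by (simp add: C_neg mod_sub_n)
    then show ?thesis using True by (simp add: module_hom_def)
  next
    case False
    then show ?thesis unfolding module_hom_def by (auto simp: rm_act_z)
  qed
qed

end


context ctx
begin

lemma exact_at: "i < n \<Longrightarrow> (if i = n - 1 then \<beta> else d (i + 1)) ` mcar (if i = n - 1 then M else P (i + 1))
             = {x \<in> mcar (P i). (if i = 0 then \<alpha> else d i) x = mzero (if i = 0 then M else P (i - 1))}"
  using exact unfolding exact_seq_def by (elim conjE allE impE)

lemma ex_dd: assumes "1 \<le> i" "i + 1 < n" "x \<in> mcar (P (i + 1))" shows "d i (d (i + 1) x) = mzero (P (i - 1))"
proof -
  have ne: "i \<noteq> n - 1" "i \<noteq> 0" "i < n" using assms by auto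
  have "d (i + 1) ` mcar (P (i + 1)) = {x \<in> mcar (P i). d i x = mzero (P (i - 1))}"
    using exact_at[OF ne(3)] ne by (simp only: if_False)
  moreover have "d (i + 1) x \<in> d (i + 1) ` mcar (P (i + 1))" using assms(3) by (rule imageI)
  ultimately show ?thesis by simp
qed

lemma ex_ad: assumes "n \<ge> 2" "x \<in> mcar (P 1)" shows "\<alpha> (d 1 x) = mzero M"
proof -
  have ne: "0 \<noteq> n - 1" "(0::nat) < n" using assms by auto
  have "d (0 + 1) ` mcar (P (0 + 1)) = {x \<in> mcar (P 0). \<alpha> x = mzero M}"
    using exact_at[OF ne(2)] ne by (simp only: if_False if_True refl)
  moreover have "d 1 x \<in> d (0 + 1) ` mcar (P (0 + 1))" using assms(2) by simp
  ultimately show ?thesis by simp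
qed

lemma ex_db: assumes "n \<ge> 2" "m \<in> mcar M" shows "d (n - 1) (\<beta> m) = mzero (P (n - 2))"
proof -
  have ne: "n - 1 \<noteq> 0" "n - 1 < n" using assms by auto
  have "\<beta> ` mcar M = {x \<in> mcar (P (n - 1)). d (n - 1) x = mzero (P (n - 1 - 1))}"
    using exact_at[OF ne(2)] ne by (simp only: if_False if_True refl)
  moreover have "\<beta> m \<in> \<beta> ` mcar M" using assms(2) by (rule imageI)
  moreover have "n - 1 - 1 = n - 2" by simp
  ultimately show ?thesis by simp
qed

lemma ex_ab: assumes "n = 1" "m \<in> mcar M" shows "\<alpha> (\<beta> m) = mzero M"
proof -
  have ne: "0 = n - 1" "(0::nat) < n" using assms by auto
  have "\<beta> ` mcar M = {x \<in> mcar (P 0). \<alpha> x = mzero M}"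
    using exact_at[OF ne(2)] ne by (simp only: if_False if_True refl)
  moreover have "\<beta> m \<in> \<beta> ` mcar M" using assms(2) by (rule imageI)
  ultimately show ?thesis by simp
qed

lemma Mgrp: "agrp (mcar M) (madd M) (mzero M) (mneg M)" by (rule rm_agrp[OF Mmod])
lemma Pgrp: "i < n \<Longrightarrow> agrp (mcar (P i)) (madd (P i)) (mzero (P i)) (mneg (P i))" by (rule rm_agrp[OF Pm])

lemma a_in: "x \<in> mcar (P 0) \<Longrightarrow> \<alpha> x \<in> mcar M" using hom_in[OF ahom] .
lemma b_in: "m \<in> mcar M \<Longrightarrow> \<beta> m \<in> mcar (P (n - 1))" using hom_in[OF bhom] .
lemma d_in: "1 \<le> i \<Longrightarrow> i < n \<Longrightarrow> x \<in> mcar (P i) \<Longrightarrow> d i x \<in> mcar (P (i - 1))"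
  using hom_in[OF dhom'] .

lemma a_gs: "x \<in> mcar (P 0) \<Longrightarrow> \<alpha> (gsign (mneg (P 0)) e x) = gsign (mneg M) e (\<alpha> x)"
  by (rule hom_gsign[OF Pm Mmod ahom]) (use n1 in auto)
lemma b_gs: "m \<in> mcar M \<Longrightarrow> \<beta> (gsign (mneg M) e m) = gsign (mneg (P (n - 1))) e (\<beta> m)"
  by (rule hom_gsign[OF Mmod Pm bhom]) (use n1 in auto)
lemma d_gs: "1 \<le> i \<Longrightarrow> i < n \<Longrightarrow> x \<in> mcar (P i) \<Longrightarrow> d i (gsign (mneg (P i)) e x) = gsign (mneg (P (i - 1))) e (d i x)"
  by (rule hom_gsign[OF Pm Pm dhom']) auto
lemma b_z: "\<beta> (mzero M) = mzero (P (n - 1))"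
  by (rule hom_z[OF Mmod Pm bhom]) (use n1 in auto)

lemma dNdN: assumes N: "N \<ge> 2" and x: "x \<in> mcar (P (N mod n))"
  shows "dN n P d \<alpha> \<beta> (N - 1) (dN n P d \<alpha> \<beta> N x) = mzero (P ((N - 2) mod n))"
proof -
  define i where "i = N mod n"
  have i: "i < n" using n1 by (simp add: i_def)
  consider "i \<ge> 2" | "i = 1" | "i = 0" by linarith
  then show ?thesis
  proof cases
    case 1
    have p1: "(N - 1) mod n = i - 1" "(N - 1) div n = N div n" using mod_pred1[OF n1, of N] 1 by (auto simp: i_def)
    have p2: "(N - 1 - 1) mod n = i - 1 - 1" using mod_pred1[OF n1, of "N - 1"] 1 p1 by auto
    have e: "N - 2 = N - 1 - 1" by simp
    have dx: "d i x \<in> mcar (P (i - 1))" using d_in[of i x] 1 i x by (simp add: i_def)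
    have "d (i - 1) (d i x) = mzero (P (i - 1 - 1))"
      using ex_dd[of "i - 1" x] 1 i x by (simp add: i_def)
    moreover have "Suc 0 \<le> i - Suc 0" using 1 by simp
    ultimately show ?thesis using 1 p1 p2 dx i
      by (simp add: dN_def e i_def[symmetric] d_gs agrp.gsign_z[OF Pgrp])
  next
    case 2
    have p1: "(N - 1) mod n = 0" "(N - 1) div n = N div n" using mod_pred1[OF n1, of N] 2 by (auto simp: i_def)
    have p2: "(N - 1 - 1) mod n = n - 1" using mod_pred0[OF n1, of "N - 1"] N p1 by auto
    have e: "N - 2 = N - 1 - 1" by simp
    have n2: "n \<ge> 2" using 2 i by simp
    have dx: "d 1 x \<in> mcar (P 0)" using d_in[of 1 x] 2 i x by (simp add: i_def)
    have "\<alpha> (d 1 x) = mzero M" using ex_ad[OF n2] x 2 by (simp add: i_def)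
    then show ?thesis using 2 p1 p2 dx i
      by (simp add: dN_def e i_def[symmetric] a_gs agrp.gsign_z[OF Mgrp] b_z agrp.gsign_z[OF Pgrp])
  next
    case 3
    have p1: "(N - 1) mod n = n - 1" "(N - 1) div n = N div n - 1" using mod_pred0[OF n1, of N] 3 N by (auto simp: i_def)
    have e: "N - 2 = N - 1 - 1" by simp
    have ax: "\<alpha> x \<in> mcar M" using a_in x 3 by (simp add: i_def)
    have bax: "\<beta> (\<alpha> x) \<in> mcar (P (n - 1))" using b_in ax .
    show ?thesis
    proof (cases "n \<ge> 2")
      case True
      have p2: "(N - 1 - 1) mod n = n - 1 - 1" using mod_pred1[OF n1, of "N - 1"] True p1 by auto
      have "d (n - 1) (\<beta> (\<alpha> x)) = mzero (P (n - 2))" using ex_db[OF True ax] .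
      moreover have "n - 2 = n - 1 - 1" by simp
      moreover have "Suc 0 \<le> n - Suc 0" using True by simp
      ultimately show ?thesis using 3 p1 p2 True bax
        by (simp add: dN_def e i_def[symmetric] d_gs agrp.gsign_z[OF Pgrp])
    next
      case False
      then have n: "n = 1" using n1 by simp
      have "\<alpha> (\<beta> (\<alpha> x)) = mzero M" using ex_ab[OF n ax] .
      then show ?thesis using 3 p1 bax n
        by (simp add: dN_def e i_def[symmetric] a_gs agrp.gsign_z[OF Mgrp] b_z agrp.gsign_z[OF Pgrp])
    qed
  qed
qed

lemma Dm_app: "x \<in> mcar (C j) \<Longrightarrow> dPe n P d \<alpha> \<beta> j x = dP n P d \<alpha> \<beta> j x"
  by (simp add: dPe_def)

lemma DD: "ecomp n P 1 (dPe n P d \<alpha> \<beta>) (dPe n P d \<alpha> \<beta>) = ezero n P 2"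
proof (rule E_ext)
  show "ecomp n P 1 (dPe n P d \<alpha> \<beta>) (dPe n P d \<alpha> \<beta>) \<in> E 2" by (rule ecomp_E[OF D_E D_E]) simp
  show "ezero n P 2 \<in> E 2" by simp
  fix j x assume x: "x \<in> mcar (C j)"
  have dx: "dP n P d \<alpha> \<beta> j x \<in> mcar (C (j + 1))" using hom_in[OF D_hom x] .
  show "ecomp n P 1 (dPe n P d \<alpha> \<beta>) (dPe n P d \<alpha> \<beta>) j x = ezero n P 2 j x"
  proof (cases "j \<le> -2")
    case True
    define N where "N = nat (- j)"
    have N: "N \<ge> 2" using True by (simp add: N_def)
    have xN: "x \<in> mcar (P (N mod n))" using x True by (simp add: C_neg N_def)
    have e1: "nat (- j - 1) = N - 1" using True by (simp add: N_def)
    have e2: "C (j + 2) = P ((N - 2) mod n)" using True by (simp add: C_neg N_def nat_diff_distrib')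
    show ?thesis using x dx True dNdN[OF N xN]
      by (simp add: Dm_app dP_neg e1 e2 N_def[symmetric])
  next
    case False
    then show ?thesis using x dx by (simp add: Dm_app dP_nonneg ac_simps)
  qed
qed

lemma dN_shift: assumes N: "N \<ge> n + 1" and x: "x \<in> mcar (P (N mod n))"
  shows "dN n P d \<alpha> \<beta> (N - n) x = gsign (mneg (P ((N - 1) mod n))) (int n) (dN n P d \<alpha> \<beta> N x)"
proof -
  have s: "(N - n) mod n = N mod n" "(N - n) div n = N div n - 1" using mod_sub_n[OF n1, of N] N by auto
  have l: "N div n \<ge> 1" using N n1 le_div_geq[of n N] by simp
  show ?thesis
  proof (cases "N mod n \<ge> 1")
    case True
    have p1: "(N - 1) mod n = N mod n - 1" using mod_pred1[OF n1 True] by auto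
    have im: "N mod n < n" using n1 by simp
    have dx: "d (N mod n) x \<in> mcar (P (N mod n - 1))" using d_in[OF True im x] .
    obtain q where q: "N div n = q + 1" using l by (metis add.commute le_add_diff_inverse)
    have "even (int ((N div n - 1) * n) - (int n + int (N div n * n)))"
      by (simp add: q algebra_simps)
    then show ?thesis using True p1 s dx im
      by (simp add: dN_def agrp.gsign_gsign[OF Pgrp] agrp.gsign_cong[OF Pgrp])
  next
    case False
    then have r: "N mod n = 0" by simp
    have p1: "(N - 1) mod n = n - 1" using mod_pred0[OF n1 _ r] N by auto
    have l2: "N div n \<ge> 2"
    proof -
      have "N = N div n * n" using div_mult_mod_eq[of N n] r by simp
      show ?thesis
      proof (rule ccontr)
        assume "\<not> N div n \<ge> 2"
        then have "N div n \<le> 1" by simp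
        then have "N div n * n \<le> 1 * n" by (rule mult_le_mono1)
        then show False using \<open>N = N div n * n\<close> N by simp
      qed
    qed
    have bax: "\<beta> (\<alpha> x) \<in> mcar (P (n - 1))" using b_in a_in x r by simp
    obtain q where q: "N div n = q + 2" using l2 by (metis add.commute le_add_diff_inverse)
    have "even (int ((N div n - 1 - 1) * n) - (int n + int ((N div n - 1) * n)))"
      by (simp add: q algebra_simps)
    then show ?thesis using r p1 s bax n1
      by (simp add: dN_def agrp.gsign_gsign[OF Pgrp] agrp.gsign_cong[OF Pgrp])
  qed
qed

end


context ctx
begin

lemma sig_app: "x \<in> mcar (C j) \<Longrightarrow> sigmaE n P j x = (if j \<le> - int n then x else mzero (C (j + int n)))"
  by (simp add: sigmaE_def)

lemma Dsig: "ecomp n P (int n) (dPe n P d \<alpha> \<beta>) (sigmaE n P) =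
   esign n P (int n + 1) (int n) (ecomp n P 1 (sigmaE n P) (dPe n P d \<alpha> \<beta>))"
proof (rule E_ext)
  show "ecomp n P (int n) (dPe n P d \<alpha> \<beta>) (sigmaE n P) \<in> E (int n + 1)"
    by (rule ecomp_E[OF D_E sigma_E]) simp
  show "esign n P (int n + 1) (int n) (ecomp n P 1 (sigmaE n P) (dPe n P d \<alpha> \<beta>)) \<in> E (int n + 1)"
    by (rule E_es_in, rule ecomp_E[OF sigma_E D_E]) simp
  fix j x assume x: "x \<in> mcar (C j)"
  have dx: "dP n P d \<alpha> \<beta> j x \<in> mcar (C (j + 1))" using hom_in[OF D_hom x] .
  have sx: "sigmaE n P j x \<in> mcar (C (j + int n))" using E_in[OF sigma_E x] .
  consider "j \<le> - int n - 1" | "j = - int n" | "j > - int n" by linarith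
  then show "ecomp n P (int n) (dPe n P d \<alpha> \<beta>) (sigmaE n P) j x =
      esign n P (int n + 1) (int n) (ecomp n P 1 (sigmaE n P) (dPe n P d \<alpha> \<beta>)) j x"
  proof cases
    case 1
    define N where "N = nat (- j)"
    have N: "N \<ge> n + 1" using 1 by (simp add: N_def)
    have xN: "x \<in> mcar (P (N mod n))" using x 1 by (simp add: C_neg N_def)
    have e1: "nat (- j - int n) = N - n" using 1 by (simp add: N_def)
    have e2a: "nat (- (j + (int n + 1))) = (N - 1) - n" using 1 by (simp add: N_def)
    have e2b: "((N - 1) - n) mod n = (N - 1) mod n" using mod_sub_n[OF n1, of "N - 1"] N by simp
    have e2: "C (j + (int n + 1)) = P ((N - 1) mod n)" using 1
      by (simp only: C_neg e2a e2b)
    have sx': "sigmaE n P j x = x" using x 1 by (simp add: sig_app)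
    have sd: "sigmaE n P (j + 1) (dP n P d \<alpha> \<beta> j x) = dP n P d \<alpha> \<beta> j x"
      using dx 1 by (simp add: sig_app)
    have j1: "j \<le> -1" "j + int n \<le> -1" using 1 n1 by auto
    show ?thesis using x dx sx sx' sd j1
      by (simp add: Dm_app dP_neg e1 e2 N_def[symmetric] dN_shift[OF N xN])
  next
    case 2
    have sx': "sigmaE n P j x = x" using x 2 by (simp add: sig_app)
    have sd: "sigmaE n P (j + 1) (dP n P d \<alpha> \<beta> j x) = mzero (C (j + 1 + int n))"
      using dx 2 by (simp add: sig_app)
    show ?thesis using x dx sx sx' sd 2 by (simp add: Dm_app dP_nonneg)
  next
    case 3
    have sx': "sigmaE n P j x = mzero (C (j + int n))" using x 3 by (simp add: sig_app)
    have sd: "sigmaE n P (j + 1) (dP n P d \<alpha> \<beta> j x) = mzero (C (j + 1 + int n))"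
      using dx 3 by (simp add: sig_app)
    have z: "dP n P d \<alpha> \<beta> (j + int n) (mzero (C (j + int n))) = mzero (C (j + int n + 1))"
      by (rule hom_z[OF Cmod Cmod D_hom])
    show ?thesis using x dx sx sx' sd z by (simp add: Dm_app ac_simps)
  qed
qed

lemma delta_sig: "edelta n P d \<alpha> \<beta> (int n) (sigmaE n P) = ezero n P (int n + 1)"
proof -
  have X: "ecomp n P 1 (sigmaE n P) (dPe n P d \<alpha> \<beta>) \<in> E (int n + 1)"
    by (rule ecomp_E[OF sigma_E D_E]) simp
  show ?thesis unfolding edelta_def Dsig
    using E_cancel[OF X, of "int n" "int n + 1"] by (simp add: esign_def)
qed

end


context agrp
begin

lemma swap4: "a \<in> S \<Longrightarrow> b \<in> S \<Longrightarrow> c \<in> S \<Longrightarrow> e \<in> S \<Longrightarrow> ad (ad a b) (ad c e) = ad (ad a c) (ad b e)"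
  by (simp add: assoc lcomm)

lemma leib_canc: assumes "A \<in> S" "B \<in> S" "X \<in> S" "odd (e1 - e)"
  shows "ad (ad A (gsign ng e1 B)) (gsign ng e (ad B X)) = ad A (gsign ng e X)"
proof -
  have "ad (ad A (gsign ng e1 B)) (gsign ng e (ad B X)) = ad A (ad (ad (gsign ng e1 B) (gsign ng e B)) (gsign ng e X))"
    using assms by (simp add: gsign_ad assoc)
  also have "\<dots> = ad A (gsign ng e X)" using assms by (simp add: gsign_cancel)
  finally show ?thesis .
qed

end

context ctx
begin

lemmas E_zl[simp] = agrp.zl[OF Egrp]
lemmas E_zr[simp] = agrp.zr[OF Egrp]

abbreviation Dm where "Dm \<equiv> dPe n P d \<alpha> \<beta>"
abbreviation sg where "sg \<equiv> sigmaE n P"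
abbreviation dl where "dl \<equiv> edelta n P d \<alpha> \<beta>"

lemma dl_E: assumes f: "f \<in> E a" and k: "k = a + 1" shows "dl a f \<in> E k"
  unfolding edelta_def k
  by (intro E_ad_in E_es_in ecomp_E[OF D_E f] ecomp_E[OF f D_E]) simp_all

lemma dl_ad: assumes f: "f \<in> E a" and g: "g \<in> E a"
  shows "dl a (eadd n P a f g) = eadd n P (a + 1) (dl a f) (dl a g)"
proof -
  interpret G: agrp "E (a + 1)" "eadd n P (a + 1)" "ezero n P (a + 1)" "eneg n P (a + 1)" by (rule Egrp)
  have 1: "ecomp n P a Dm (eadd n P a f g) = eadd n P (a + 1) (ecomp n P a Dm f) (ecomp n P a Dm g)"
    by (rule cp_ad_r[OF D_E f g]) simp
  have 2: "ecomp n P 1 (eadd n P a f g) Dm = eadd n P (a + 1) (ecomp n P 1 f Dm) (ecomp n P 1 g Dm)"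
    by (rule cp_ad_l[OF f g D_E]) simp
  have i: "ecomp n P a Dm f \<in> E (a + 1)" "ecomp n P a Dm g \<in> E (a + 1)"
     "ecomp n P 1 f Dm \<in> E (a + 1)" "ecomp n P 1 g Dm \<in> E (a + 1)"
    by (rule ecomp_E[OF D_E f], simp, rule ecomp_E[OF D_E g], simp, rule ecomp_E[OF f D_E], simp,
        rule ecomp_E[OF g D_E], simp)
  show ?thesis unfolding edelta_def 1 2
    using i by (simp add: E_es_ad G.swap4)
qed

lemma dl_es: assumes f: "f \<in> E a"
  shows "dl a (esign n P a e f) = esign n P (a + 1) e (dl a f)"
proof -
  have 1: "ecomp n P a Dm (esign n P a e f) = esign n P (a + 1) e (ecomp n P a Dm f)"
    by (rule cp_es_r[OF D_E f]) simp
  have 2: "ecomp n P 1 (esign n P a e f) Dm = esign n P (a + 1) e (ecomp n P 1 f Dm)"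
    by (rule cp_es_l[OF f D_E]) simp
  have i: "ecomp n P a Dm f \<in> E (a + 1)" "ecomp n P 1 f Dm \<in> E (a + 1)"
    by (rule ecomp_E[OF D_E f], simp, rule ecomp_E[OF f D_E], simp)
  show ?thesis unfolding edelta_def 1 2
    using i by (simp add: E_es_ad E_es_es add.commute)
qed

lemma dl_sm: assumes f: "f \<in> E a"
  shows "dl a (esmult n P \<iota> a c f) = esmult n P \<iota> (a + 1) c (dl a f)"
proof -
  have 1: "ecomp n P a Dm (esmult n P \<iota> a c f) = esmult n P \<iota> (a + 1) c (ecomp n P a Dm f)"
    by (rule cp_sm_r[OF D_E f]) simp
  have 2: "ecomp n P 1 (esmult n P \<iota> a c f) Dm = esmult n P \<iota> (a + 1) c (ecomp n P 1 f Dm)"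
    by (rule cp_sm_l[OF f D_E]) simp
  have i: "ecomp n P a Dm f \<in> E (a + 1)" "ecomp n P 1 f Dm \<in> E (a + 1)"
    by (rule ecomp_E[OF D_E f], simp, rule ecomp_E[OF f D_E], simp)
  show ?thesis unfolding edelta_def 1 2
    using i by (simp add: E_es_sm E_ad_sm)
qed

lemma dl_z: "dl a (ezero n P a) = ezero n P (a + 1)"
proof -
  have 1: "ecomp n P a Dm (ezero n P a) = ezero n P (a + 1)"
    by (rule cp_z_r[OF D_E]) simp
  have 2: "ecomp n P 1 (ezero n P a) Dm = ezero n P (a + 1)"
    by (rule cp_z_l[OF D_E]) simp
  show ?thesis unfolding edelta_def 1 2 by simp
qed

lemma dl_cp: assumes f: "f \<in> E a" and g: "g \<in> E b" and k: "k = a + b"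
  shows "dl k (ecomp n P b f g) =
     eadd n P (k + 1) (ecomp n P b (dl a f) g) (esign n P (k + 1) a (ecomp n P (b + 1) f (dl b g)))"
proof -
  interpret G: agrp "E (k + 1)" "eadd n P (k + 1)" "ezero n P (k + 1)" "eneg n P (k + 1)" by (rule Egrp)
  define A where "A = ecomp n P b (ecomp n P a Dm f) g"
  define B where "B = ecomp n P (b + 1) f (ecomp n P b Dm g)"
  define X where "X = ecomp n P (b + 1) f (ecomp n P 1 g Dm)"
  have Df: "ecomp n P a Dm f \<in> E (a + 1)" by (rule ecomp_E[OF D_E f]) simp
  have fD: "ecomp n P 1 f Dm \<in> E (a + 1)" by (rule ecomp_E[OF f D_E]) simp
  have Dg: "ecomp n P b Dm g \<in> E (b + 1)" by (rule ecomp_E[OF D_E g]) simp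
  have gD: "ecomp n P 1 g Dm \<in> E (b + 1)" by (rule ecomp_E[OF g D_E]) simp
  have A: "A \<in> E (k + 1)" unfolding A_def by (rule ecomp_E[OF Df g]) (simp add: k)
  have B: "B \<in> E (k + 1)" unfolding B_def by (rule ecomp_E[OF f Dg]) (simp add: k)
  have X: "X \<in> E (k + 1)" unfolding X_def by (rule ecomp_E[OF f gD]) (simp add: k)
  have l1: "ecomp n P k Dm (ecomp n P b f g) = A"
    unfolding A_def by (rule cp_assoc[OF D_E f g k, symmetric])
  have l2: "ecomp n P 1 (ecomp n P b f g) Dm = X"
    unfolding X_def by (rule cp_assoc[OF f g D_E refl])
  have r1: "ecomp n P b (dl a f) g = eadd n P (k + 1) A (esign n P (k + 1) (a + 1) B)"
  proof -
    have "ecomp n P b (dl a f) g = eadd n P (k + 1) A (ecomp n P b (esign n P (a + 1) (a + 1) (ecomp n P 1 f Dm)) g)"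
      unfolding edelta_def A_def by (rule cp_ad_l[OF Df _ g]) (simp_all add: fD k)
    also have "ecomp n P b (esign n P (a + 1) (a + 1) (ecomp n P 1 f Dm)) g
       = esign n P (k + 1) (a + 1) (ecomp n P b (ecomp n P 1 f Dm) g)"
      by (rule cp_es_l[OF fD g]) (simp add: k)
    also have "ecomp n P b (ecomp n P 1 f Dm) g = B"
      unfolding B_def by (rule cp_assoc[OF f D_E g]) simp
    finally show ?thesis .
  qed
  have r2: "ecomp n P (b + 1) f (dl b g) = eadd n P (k + 1) B (esign n P (k + 1) (b + 1) X)"
  proof -
    have "ecomp n P (b + 1) f (dl b g) = eadd n P (k + 1) B (ecomp n P (b + 1) f (esign n P (b + 1) (b + 1) (ecomp n P 1 g Dm)))"
      unfolding edelta_def B_def by (rule cp_ad_r[OF f Dg]) (simp_all add: gD k)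
    also have "ecomp n P (b + 1) f (esign n P (b + 1) (b + 1) (ecomp n P 1 g Dm))
       = esign n P (k + 1) (b + 1) X"
      unfolding X_def by (rule cp_es_r[OF f gD]) (simp add: k)
    finally show ?thesis .
  qed
  have "eadd n P (k + 1) (eadd n P (k + 1) A (esign n P (k + 1) (a + 1) B))
          (esign n P (k + 1) a (eadd n P (k + 1) B (esign n P (k + 1) (b + 1) X)))
        = eadd n P (k + 1) A (esign n P (k + 1) a (esign n P (k + 1) (b + 1) X))"
    unfolding esign_gs by (rule G.leib_canc) (simp_all add: A B X esign_gs[symmetric])
  also have "esign n P (k + 1) a (esign n P (k + 1) (b + 1) X) = esign n P (k + 1) (k + 1) X"
    using X by (simp add: E_es_es k add.assoc)
  finally have c: "eadd n P (k + 1) (eadd n P (k + 1) A (esign n P (k + 1) (a + 1) B))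
          (esign n P (k + 1) a (eadd n P (k + 1) B (esign n P (k + 1) (b + 1) X)))
        = eadd n P (k + 1) A (esign n P (k + 1) (k + 1) X)" .
  have lhs: "dl k (ecomp n P b f g) = eadd n P (k + 1) A (esign n P (k + 1) (k + 1) X)"
    by (simp only: edelta_def l1 l2)
  show ?thesis unfolding lhs r1 r2 c ..
qed

lemma dl_dl: assumes f: "f \<in> E a" and k: "k = a + 1"
  shows "dl k (dl a f) = ezero n P (k + 1)"
proof -
  interpret G: agrp "E (k + 1)" "eadd n P (k + 1)" "ezero n P (k + 1)" "eneg n P (k + 1)" by (rule Egrp)
  define X where "X = ecomp n P a Dm f"
  define Y where "Y = ecomp n P 1 f Dm"
  define Z where "Z = ecomp n P 1 (ecomp n P a Dm f) Dm"
  have X: "X \<in> E k" unfolding X_def by (rule ecomp_E[OF D_E f]) (simp add: k)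
  have Y: "Y \<in> E k" unfolding Y_def by (rule ecomp_E[OF f D_E]) (simp add: k)
  have Z: "Z \<in> E (k + 1)" unfolding Z_def by (rule ecomp_E[OF X[unfolded X_def] D_E]) simp
  have "dl a f = eadd n P k X (esign n P k k Y)" unfolding edelta_def X_def Y_def k ..
  then have "dl k (dl a f) = eadd n P (k + 1) (dl k X) (esign n P (k + 1) k (dl k Y))"
    using X Y by (simp add: dl_ad dl_es)
  also have "dl k X = esign n P (k + 1) (k + 1) Z"
  proof -
    have "ecomp n P k Dm X = ecomp n P a (ecomp n P 1 Dm Dm) f"
      unfolding X_def by (rule cp_assoc[OF D_E D_E f, symmetric]) (simp add: k)
    also have "\<dots> = ezero n P (k + 1)" unfolding DD by (rule cp_z_l[OF f]) (simp add: k)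
    finally show ?thesis unfolding edelta_def Z_def X_def[symmetric] using Z[unfolded Z_def X_def[symmetric]] by simp
  qed
  also have "dl k Y = Z"
  proof -
    have "ecomp n P k Dm Y = Z"
      unfolding Y_def Z_def by (rule cp_assoc[OF D_E f D_E, symmetric]) (simp add: k)
    moreover have "ecomp n P 1 Y Dm = ecomp n P 2 f (ecomp n P 1 Dm Dm)"
      unfolding Y_def by (rule cp_assoc[OF f D_E D_E]) simp
    moreover have "ecomp n P 2 f (ecomp n P 1 Dm Dm) = ezero n P (k + 1)"
      unfolding DD by (rule cp_z_r[OF f]) (simp add: k)
    ultimately show ?thesis unfolding edelta_def using Z by simp
  qed
  also have "eadd n P (k + 1) (esign n P (k + 1) (k + 1) Z) (esign n P (k + 1) k Z) = ezero n P (k + 1)"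
    by (rule E_cancel[OF Z]) simp
  finally show ?thesis .
qed

end


context ctx
begin

definition W :: "int \<Rightarrow> int \<Rightarrow> (int \<Rightarrow> 'm \<Rightarrow> 'm) set" where
  "W i e = {x \<in> E i. ecomp n P i sg x = esign n P (i + int n) e (ecomp n P (int n) x sg)}"

lemma sigE_W: "sigE n P i = W i (int n * i)"
  by (simp add: sigE_def W_def)

lemma msigE_W: "msigE n P i = W i (int n * (i + 1))"
  by (simp add: msigE_def W_def)

lemma W_E: "x \<in> W i e \<Longrightarrow> x \<in> E i"
  by (simp add: W_def)

lemma W_eq: "x \<in> W i e \<Longrightarrow> ecomp n P i sg x = esign n P (i + int n) e (ecomp n P (int n) x sg)"
  by (simp add: W_def)

lemma W_cong: "even (e - e') \<Longrightarrow> W i e = W i e'"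
  unfolding W_def by (simp only: E_es_cong[of e e'])

lemma sigE_in: "x \<in> E i \<Longrightarrow> ecomp n P (int n) x sg \<in> E (i + int n)"
  by (rule ecomp_E[OF _ sigma_E]) simp_all

lemma sgE_in: "x \<in> E i \<Longrightarrow> ecomp n P i sg x \<in> E (i + int n)"
  by (rule ecomp_E[OF sigma_E]) simp_all

lemma W_ad: assumes x: "x \<in> W i e" and y: "y \<in> W i e" shows "eadd n P i x y \<in> W i e"
proof -
  have xE: "x \<in> E i" and yE: "y \<in> E i" using x y by (simp_all add: W_E)
  have "ecomp n P i sg (eadd n P i x y) = eadd n P (i + int n) (ecomp n P i sg x) (ecomp n P i sg y)"
    by (rule cp_ad_r[OF sigma_E xE yE]) simp
  moreover have "ecomp n P (int n) (eadd n P i x y) sg = eadd n P (i + int n) (ecomp n P (int n) x sg) (ecomp n P (int n) y sg)"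
    by (rule cp_ad_l[OF xE yE sigma_E]) simp
  ultimately show ?thesis using xE yE W_eq[OF x] W_eq[OF y]
    by (simp add: W_def E_es_ad sigE_in)
qed

lemma W_es: assumes x: "x \<in> W i e" shows "esign n P i e' x \<in> W i e"
proof -
  have xE: "x \<in> E i" using x by (simp add: W_E)
  have "ecomp n P i sg (esign n P i e' x) = esign n P (i + int n) e' (ecomp n P i sg x)"
    by (rule cp_es_r[OF sigma_E xE]) simp
  moreover have "ecomp n P (int n) (esign n P i e' x) sg = esign n P (i + int n) e' (ecomp n P (int n) x sg)"
    by (rule cp_es_l[OF xE sigma_E]) simp
  ultimately show ?thesis using xE W_eq[OF x]
    by (simp add: W_def E_es_es sigE_in add.commute)
qed

lemma eneg_es: "eneg n P i f = esign n P i 1 f"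
  by (simp add: esign_def)

lemma W_ng: "x \<in> W i e \<Longrightarrow> eneg n P i x \<in> W i e"
  unfolding eneg_es by (rule W_es)

lemma W_z: "ezero n P i \<in> W i e"
proof -
  have "ecomp n P i sg (ezero n P i) = ezero n P (i + int n)"
    by (rule cp_z_r[OF sigma_E]) simp
  moreover have "ecomp n P (int n) (ezero n P i) sg = ezero n P (i + int n)"
    by (rule cp_z_l[OF sigma_E]) simp
  ultimately show ?thesis by (simp add: W_def)
qed

lemma W_sm: assumes x: "x \<in> W i e" shows "esmult n P \<iota> i c x \<in> W i e"
proof -
  have xE: "x \<in> E i" using x by (simp add: W_E)
  have "ecomp n P i sg (esmult n P \<iota> i c x) = esmult n P \<iota> (i + int n) c (ecomp n P i sg x)"
    by (rule cp_sm_r[OF sigma_E xE]) simp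
  moreover have "ecomp n P (int n) (esmult n P \<iota> i c x) sg = esmult n P \<iota> (i + int n) c (ecomp n P (int n) x sg)"
    by (rule cp_sm_l[OF xE sigma_E]) simp
  ultimately show ?thesis using xE W_eq[OF x]
    by (simp add: W_def E_es_sm sigE_in)
qed

lemma W_mul: assumes x: "x \<in> W a e1" and y: "y \<in> W b e2" and k: "k = a + b"
  shows "ecomp n P b x y \<in> W k (e1 + e2)"
proof -
  have xE: "x \<in> E a" and yE: "y \<in> E b" using x y by (simp_all add: W_E)
  have xs: "ecomp n P (int n) x sg \<in> E (a + int n)" by (rule sigE_in[OF xE])
  have ys: "ecomp n P (int n) y sg \<in> E (b + int n)" by (rule sigE_in[OF yE])
  have "ecomp n P k sg (ecomp n P b x y) = ecomp n P b (ecomp n P a sg x) y"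
    by (rule cp_assoc[OF sigma_E xE yE k, symmetric])
  also have "\<dots> = ecomp n P b (esign n P (a + int n) e1 (ecomp n P (int n) x sg)) y"
    by (simp add: W_eq[OF x])
  also have "\<dots> = esign n P (k + int n) e1 (ecomp n P b (ecomp n P (int n) x sg) y)"
    by (rule cp_es_l[OF xs yE]) (simp add: k)
  also have "ecomp n P b (ecomp n P (int n) x sg) y = ecomp n P (b + int n) x (ecomp n P b sg y)"
    by (rule cp_assoc[OF xE sigma_E yE]) simp
  also have "\<dots> = ecomp n P (b + int n) x (esign n P (b + int n) e2 (ecomp n P (int n) y sg))"
    by (simp add: W_eq[OF y])
  also have "\<dots> = esign n P (k + int n) e2 (ecomp n P (b + int n) x (ecomp n P (int n) y sg))"
    by (rule cp_es_r[OF xE ys]) (simp add: k)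
  also have "ecomp n P (b + int n) x (ecomp n P (int n) y sg) = ecomp n P (int n) (ecomp n P b x y) sg"
    by (rule cp_assoc[OF xE yE sigma_E, symmetric]) simp
  finally have "ecomp n P k sg (ecomp n P b x y) = esign n P (k + int n) (e1 + e2) (ecomp n P (int n) (ecomp n P b x y) sg)"
    using sigE_in[OF ecomp_E[OF xE yE k]] by (simp add: E_es_es)
  then show ?thesis using ecomp_E[OF xE yE k] by (simp add: W_def)
qed

lemma W_dl: assumes x: "x \<in> W a e" and a1: "a1 = a + 1"
  shows "dl a x \<in> W a1 (e + int n)"
proof -
  have xE: "x \<in> E a" using x by (simp add: W_E)
  have dxE: "dl a x \<in> E (a + 1)" by (rule dl_E[OF xE refl])
  have sxE: "ecomp n P a sg x \<in> E (a + int n)" by (rule sgE_in[OF xE])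
  have xsE: "ecomp n P (int n) x sg \<in> E (a + int n)" by (rule sigE_in[OF xE])
  have sdx: "ecomp n P (a + 1) sg (dl a x) \<in> E (a + int n + 1)"
    by (rule ecomp_E[OF sigma_E dxE]) simp
  have h1: "dl (a + int n) (ecomp n P a sg x) = esign n P (a + int n + 1) (int n) (ecomp n P (a + 1) sg (dl a x))"
  proof -
    have "dl (a + int n) (ecomp n P a sg x) = eadd n P (a + int n + 1) (ecomp n P a (dl (int n) sg) x)
        (esign n P (a + int n + 1) (int n) (ecomp n P (a + 1) sg (dl a x)))"
      by (rule dl_cp[OF sigma_E xE]) simp
    moreover have "ecomp n P a (dl (int n) sg) x = ezero n P (a + int n + 1)"
      unfolding delta_sig by (rule cp_z_l[OF xE]) simp
    ultimately show ?thesis using sdx by simp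
  qed
  have h2: "dl (a + int n) (ecomp n P (int n) x sg) = ecomp n P (int n) (dl a x) sg"
  proof -
    have "dl (a + int n) (ecomp n P (int n) x sg) = eadd n P (a + int n + 1) (ecomp n P (int n) (dl a x) sg)
        (esign n P (a + int n + 1) a (ecomp n P (int n + 1) x (dl (int n) sg)))"
      by (rule dl_cp[OF xE sigma_E]) simp
    moreover have "ecomp n P (int n + 1) x (dl (int n) sg) = ezero n P (a + int n + 1)"
      unfolding delta_sig by (rule cp_z_r[OF xE]) simp
    moreover have "ecomp n P (int n) (dl a x) sg \<in> E (a + int n + 1)"
      by (rule ecomp_E[OF dxE sigma_E]) simp
    ultimately show ?thesis by simp
  qed
  have "ecomp n P (a + 1) sg (dl a x) = esign n P (a + int n + 1) (int n) (dl (a + int n) (ecomp n P a sg x))"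
    using sdx by (simp add: h1 E_es_es)
  also have "\<dots> = esign n P (a + int n + 1) (int n) (esign n P (a + int n + 1) e (dl (a + int n) (ecomp n P (int n) x sg)))"
    by (simp add: W_eq[OF x] dl_es[OF xsE])
  also have "\<dots> = esign n P (a + int n + 1) (e + int n) (ecomp n P (int n) (dl a x) sg)"
    unfolding h2 using ecomp_E[OF dxE sigma_E refl] by (simp add: E_es_es add.commute add.left_commute)
  finally have "ecomp n P (a + 1) sg (dl a x) = esign n P (a + int n + 1) (e + int n) (ecomp n P (int n) (dl a x) sg)" .
  moreover have "a + int n + 1 = a + 1 + int n" by simp
  ultimately show ?thesis using dxE by (simp add: W_def a1)
qed

end


lemma kvs_sub:
  assumes k: "kvs V ad z ng sm" and sub: "U \<subseteq> V" and h: "z \<in> U" "\<And>a b. a \<in> U \<Longrightarrow> b \<in> U \<Longrightarrow> ad a b \<in> U"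
    "\<And>a. a \<in> U \<Longrightarrow> ng a \<in> U" "\<And>c a. a \<in> U \<Longrightarrow> sm c a \<in> U"
  shows "kvs U ad z ng sm"
proof -
  have s: "\<And>t. t \<in> U \<Longrightarrow> t \<in> V" using sub by blast
  have c1: "\<forall>a\<in>V. \<forall>b\<in>V. \<forall>e\<in>V. ad (ad a b) e = ad a (ad b e)" using k unfolding kvs_def by blast
  have c2: "\<forall>a\<in>V. \<forall>b\<in>V. ad a b = ad b a" using k unfolding kvs_def by blast
  have c3: "\<forall>a\<in>V. ad z a = a" using k unfolding kvs_def by blast
  have c4: "\<forall>a\<in>V. ad (ng a) a = z" using k unfolding kvs_def by blast
  have c5: "\<forall>a\<in>V. sm 1 a = a" using k unfolding kvs_def by blast
  have c6: "\<forall>c c'. \<forall>a\<in>V. sm (c * c') a = sm c (sm c' a)" using k unfolding kvs_def by blast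
  have c7: "\<forall>c. \<forall>a\<in>V. \<forall>b\<in>V. sm c (ad a b) = ad (sm c a) (sm c b)" using k unfolding kvs_def by blast
  have c8: "\<forall>c c'. \<forall>a\<in>V. sm (c + c') a = ad (sm c a) (sm c' a)" using k unfolding kvs_def by blast
  show ?thesis unfolding kvs_def
  proof (intro conjI ballI allI)
    show "z \<in> U" by (rule h(1))
  next
    fix a b assume "a \<in> U" "b \<in> U" then show "ad a b \<in> U" by (rule h(2))
  next
    fix a assume "a \<in> U" then show "ng a \<in> U" by (rule h(3))
  next
    fix c a assume "a \<in> U" then show "sm c a \<in> U" by (rule h(4))
  next
    fix a b e assume "a \<in> U" "b \<in> U" "e \<in> U" then show "ad (ad a b) e = ad a (ad b e)" using c1 s by blast
  next
    fix a b assume "a \<in> U" "b \<in> U" then show "ad a b = ad b a" using c2 s by blast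
  next
    fix a assume "a \<in> U" then show "ad z a = a" using c3 s by blast
  next
    fix a assume "a \<in> U" then show "ad (ng a) a = z" using c4 s by blast
  next
    fix a assume "a \<in> U" then show "sm 1 a = a" using c5 s by blast
  next
    fix c c' a assume "a \<in> U" then show "sm (c * c') a = sm c (sm c' a)" using c6 s by blast
  next
    fix c a b assume "a \<in> U" "b \<in> U" then show "sm c (ad a b) = ad (sm c a) (sm c b)" using c7 s by blast
  next
    fix c c' a assume "a \<in> U" then show "sm (c + c') a = ad (sm c a) (sm c' a)" using c8 s by blast
  qed
qed

lemma kvs_prod:
  assumes "kvs V1 a1 z1 n1 s1" "kvs V2 a2 z2 n2 s2"
  shows "kvs {(x, y). x \<in> V1 \<and> y \<in> V2} (\<lambda>p q. (a1 (fst p) (fst q), a2 (snd p) (snd q))) (z1, z2)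
           (\<lambda>p. (n1 (fst p), n2 (snd p))) (\<lambda>c p. (s1 c (fst p), s2 c (snd p)))"
  using assms unfolding kvs_def by auto

context ctx
begin

lemma W_sub: "W i e \<subseteq> E i" by (auto simp: W_def)

lemma W_kvs: "kvs (W i e) (eadd n P i) (ezero n P i) (eneg n P i) (esmult n P \<iota> i)"
  by (rule kvs_sub[OF Ekvs W_sub W_z W_ad W_ng W_sm])

lemma Tcar_eq: "Tcar n P i = {(x, y). x \<in> W i (int n * i) \<and> y \<in> W (i - int n + 1) (int n * (i - int n + 1 + 1))}"
  by (simp add: Tcar_def sigE_W msigE_W)

lemma Tcar_iff: "p \<in> Tcar n P i \<longleftrightarrow> fst p \<in> W i (int n * i) \<and> snd p \<in> W (i - int n + 1) (int n * (i - int n + 1 + 1))"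
  by (cases p) (simp add: Tcar_eq)

lemma T_kvs: "kvs (Tcar n P i) (Tadd n P i) (Tzero n P i) (Tneg n P i) (Tsmult n P \<iota> i)"
proof -
  have "Tadd n P i = (\<lambda>p q. (eadd n P i (fst p) (fst q), eadd n P (i - int n + 1) (snd p) (snd q)))"
    by (simp add: Tadd_def[abs_def])
  moreover have "Tneg n P i = (\<lambda>p. (eneg n P i (fst p), eneg n P (i - int n + 1) (snd p)))"
    by (simp add: Tneg_def[abs_def])
  moreover have "Tsmult n P \<iota> i = (\<lambda>c p. (esmult n P \<iota> i c (fst p), esmult n P \<iota> (i - int n + 1) c (snd p)))"
    by (simp add: Tsmult_def[abs_def])
  moreover have "Tzero n P i = (ezero n P i, ezero n P (i - int n + 1))"
    by (simp add: Tzero_def)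
  ultimately show ?thesis unfolding Tcar_eq by (simp only: kvs_prod[OF W_kvs W_kvs])
qed

lemma even_nn: "even (int n * (1 - int n))"
  by (simp add: algebra_simps)

lemma Tmul_in: assumes p: "p \<in> Tcar n P i" and q: "q \<in> Tcar n P j"
  shows "Tmul n P i j p q \<in> Tcar n P (i + j)"
proof -
  obtain x y where pxy: "p = (x, y)" by (cases p)
  obtain a b where qab: "q = (a, b)" by (cases q)
  have x: "x \<in> W i (int n * i)" and y: "y \<in> W (i - int n + 1) (int n * (i - int n + 1 + 1))"
    using p by (simp_all add: Tcar_iff pxy)
  have a: "a \<in> W j (int n * j)" and b: "b \<in> W (j - int n + 1) (int n * (j - int n + 1 + 1))"
    using q by (simp_all add: Tcar_iff qab)
  have 1: "ecomp n P j x a \<in> W (i + j) (int n * (i + j))"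
    using W_mul[OF x a refl] by (simp add: algebra_simps)
  have 2: "ecomp n P (j - int n + 1) x b \<in> W (i + j - int n + 1) (int n * (i + j - int n + 1 + 1))"
    using W_mul[OF x b, of "i + j - int n + 1"] by (simp add: algebra_simps)
  have 3: "ecomp n P j y a \<in> W (i + j - int n + 1) (int n * (i + j - int n + 1 + 1))"
    using W_mul[OF y a, of "i + j - int n + 1"] by (simp add: algebra_simps)
  show ?thesis unfolding pxy qab Tmul_def Tcar_iff
    using 1 2 3 by (simp add: W_ad W_es W_ng esign_def)
qed

end


context ctx
begin

lemma Tc: assumes "p \<in> Tcar n P i" obtains x y where "p = (x, y)" "x \<in> E i" "y \<in> E (i - int n + 1)"
  using assms by (cases p) (auto simp: Tcar_iff W_def)

lemma Tmul_add_l: assumes p: "p \<in> Tcar n P i" and p': "p' \<in> Tcar n P i" and q: "q \<in> Tcar n P j"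
  shows "Tmul n P i j (Tadd n P i p p') q = Tadd n P (i + j) (Tmul n P i j p q) (Tmul n P i j p' q)"
proof -
  obtain x y where p1: "p = (x, y)" and x: "x \<in> E i" and y: "y \<in> E (i - int n + 1)" using Tc[OF p] by blast
  obtain x' y' where p2: "p' = (x', y')" and x': "x' \<in> E i" and y': "y' \<in> E (i - int n + 1)" using Tc[OF p'] by blast
  obtain a b where q1: "q = (a, b)" and a: "a \<in> E j" and b: "b \<in> E (j - int n + 1)" using Tc[OF q] by blast
  let ?K = "i + j - int n + 1"
  interpret G: agrp "E ?K" "eadd n P ?K" "ezero n P ?K" "eneg n P ?K" by (rule Egrp)
  have m: "ecomp n P (j - int n + 1) x b \<in> E ?K" "ecomp n P (j - int n + 1) x' b \<in> E ?K"
     "ecomp n P j y a \<in> E ?K" "ecomp n P j y' a \<in> E ?K"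
    by (rule ecomp_E[OF x b], simp, rule ecomp_E[OF x' b], simp, rule ecomp_E[OF y a], simp, rule ecomp_E[OF y' a], simp)
  show ?thesis unfolding p1 p2 q1 Tmul_def Tadd_def
    using m
    by (simp add: cp_ad_l[OF x x' a refl] cp_ad_l[OF x x' b, where k = ?K] cp_ad_l[OF y y' a, where k = ?K]
        E_es_ad G.swap4)
qed

lemma Tmul_add_r: assumes p: "p \<in> Tcar n P i" and q: "q \<in> Tcar n P j" and q': "q' \<in> Tcar n P j"
  shows "Tmul n P i j p (Tadd n P j q q') = Tadd n P (i + j) (Tmul n P i j p q) (Tmul n P i j p q')"
proof -
  obtain x y where p1: "p = (x, y)" and x: "x \<in> E i" and y: "y \<in> E (i - int n + 1)" using Tc[OF p] by blast
  obtain a b where q1: "q = (a, b)" and a: "a \<in> E j" and b: "b \<in> E (j - int n + 1)" using Tc[OF q] by blast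
  obtain a' b' where q2: "q' = (a', b')" and a': "a' \<in> E j" and b': "b' \<in> E (j - int n + 1)" using Tc[OF q'] by blast
  let ?K = "i + j - int n + 1"
  interpret G: agrp "E ?K" "eadd n P ?K" "ezero n P ?K" "eneg n P ?K" by (rule Egrp)
  have m: "ecomp n P (j - int n + 1) x b \<in> E ?K" "ecomp n P (j - int n + 1) x b' \<in> E ?K"
     "ecomp n P j y a \<in> E ?K" "ecomp n P j y a' \<in> E ?K"
    by (rule ecomp_E[OF x b], simp, rule ecomp_E[OF x b'], simp, rule ecomp_E[OF y a], simp, rule ecomp_E[OF y a'], simp)
  show ?thesis unfolding p1 q2 q1 Tmul_def Tadd_def
    using m
    by (simp add: cp_ad_r[OF x a a' refl] cp_ad_r[OF x b b', where k = ?K] cp_ad_r[OF y a a', where k = ?K]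
        E_es_ad G.swap4)
qed

lemma Tmul_sm_l: assumes p: "p \<in> Tcar n P i" and q: "q \<in> Tcar n P j"
  shows "Tmul n P i j (Tsmult n P \<iota> i c p) q = Tsmult n P \<iota> (i + j) c (Tmul n P i j p q)"
proof -
  obtain x y where p1: "p = (x, y)" and x: "x \<in> E i" and y: "y \<in> E (i - int n + 1)" using Tc[OF p] by blast
  obtain a b where q1: "q = (a, b)" and a: "a \<in> E j" and b: "b \<in> E (j - int n + 1)" using Tc[OF q] by blast
  let ?K = "i + j - int n + 1"
  have m: "ecomp n P (j - int n + 1) x b \<in> E ?K" "ecomp n P j y a \<in> E ?K"
    by (rule ecomp_E[OF x b], simp, rule ecomp_E[OF y a], simp)
  show ?thesis unfolding p1 q1 Tmul_def Tsmult_def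
    using m
    by (simp add: cp_sm_l[OF x a refl] cp_sm_l[OF x b, where k = ?K] cp_sm_l[OF y a, where k = ?K]
        E_es_sm E_ad_sm)
qed

lemma Tmul_sm_r: assumes p: "p \<in> Tcar n P i" and q: "q \<in> Tcar n P j"
  shows "Tmul n P i j p (Tsmult n P \<iota> j c q) = Tsmult n P \<iota> (i + j) c (Tmul n P i j p q)"
proof -
  obtain x y where p1: "p = (x, y)" and x: "x \<in> E i" and y: "y \<in> E (i - int n + 1)" using Tc[OF p] by blast
  obtain a b where q1: "q = (a, b)" and a: "a \<in> E j" and b: "b \<in> E (j - int n + 1)" using Tc[OF q] by blast
  let ?K = "i + j - int n + 1"
  have m: "ecomp n P (j - int n + 1) x b \<in> E ?K" "ecomp n P j y a \<in> E ?K"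
    by (rule ecomp_E[OF x b], simp, rule ecomp_E[OF y a], simp)
  show ?thesis unfolding p1 q1 Tmul_def Tsmult_def
    using m
    by (simp add: cp_sm_r[OF x a refl] cp_sm_r[OF x b, where k = ?K] cp_sm_r[OF y a, where k = ?K]
        E_es_sm E_ad_sm)
qed

lemma Tone_in: "Tone n P \<in> Tcar n P 0"
proof -
  have "identE n P \<in> W 0 0"
  proof -
    have "ecomp n P 0 sg (identE n P) = sg" by (rule cp_id_r[OF sigma_E])
    moreover have "ecomp n P (int n) (identE n P) sg = sg" by (rule cp_id_l[OF sigma_E])
    ultimately show ?thesis by (simp add: W_def identE_E)
  qed
  then show ?thesis unfolding Tone_def Tcar_iff by (simp add: W_z)
qed

lemma Tone_l: assumes p: "p \<in> Tcar n P i" shows "Tmul n P 0 i (Tone n P) p = p"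
proof -
  obtain x y where p1: "p = (x, y)" and x: "x \<in> E i" and y: "y \<in> E (i - int n + 1)" using Tc[OF p] by blast
  have z: "ecomp n P i (ezero n P (1 - int n)) x = ezero n P (i - int n + 1)"
    by (rule cp_z_l[OF x]) simp
  show ?thesis unfolding p1 Tmul_def Tone_def using x y
    by (simp add: cp_id_l z)
qed

lemma Tone_r: assumes p: "p \<in> Tcar n P i" shows "Tmul n P i 0 p (Tone n P) = p"
proof -
  obtain x y where p1: "p = (x, y)" and x: "x \<in> E i" and y: "y \<in> E (i - int n + 1)" using Tc[OF p] by blast
  have z: "ecomp n P (1 - int n) x (ezero n P (1 - int n)) = ezero n P (i - int n + 1)"
    by (rule cp_z_r[OF x]) simp
  show ?thesis unfolding p1 Tmul_def Tone_def using x y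
    by (simp add: cp_id_r z)
qed

lemma Tmul_assoc: assumes p: "p \<in> Tcar n P i" and q: "q \<in> Tcar n P j" and r: "r \<in> Tcar n P l"
  shows "Tmul n P (i + j) l (Tmul n P i j p q) r = Tmul n P i (j + l) p (Tmul n P j l q r)"
proof -
  obtain x y where p1: "p = (x, y)" and x: "x \<in> E i" and y: "y \<in> E (i - int n + 1)" using Tc[OF p] by blast
  obtain a b where q1: "q = (a, b)" and a: "a \<in> E j" and b: "b \<in> E (j - int n + 1)" using Tc[OF q] by blast
  obtain e f where r1: "r = (e, f)" and e: "e \<in> E l" and f: "f \<in> E (l - int n + 1)" using Tc[OF r] by blast
  let ?K = "i + j + l - int n + 1"
  interpret G: agrp "E ?K" "eadd n P ?K" "ezero n P ?K" "eneg n P ?K" by (rule Egrp)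
  have i1: "i + (j + l) - int n + 1 = ?K" "j + l - int n + 1 = j + (l - int n + 1)" by simp_all
  define A where "A = ecomp n P (l - int n + 1) (ecomp n P j x a) f"
  define B where "B = ecomp n P l (ecomp n P (j - int n + 1) x b) e"
  define Cc where "Cc = ecomp n P l (ecomp n P j y a) e"
  have xa: "ecomp n P j x a \<in> E (i + j)" by (rule ecomp_E[OF x a refl])
  have xb: "ecomp n P (j - int n + 1) x b \<in> E (i + j - int n + 1)" by (rule ecomp_E[OF x b]) simp
  have ya: "ecomp n P j y a \<in> E (i + j - int n + 1)" by (rule ecomp_E[OF y a]) simp
  have af: "ecomp n P (l - int n + 1) a f \<in> E (j + l - int n + 1)" by (rule ecomp_E[OF a f]) simp
  have be: "ecomp n P l b e \<in> E (j + l - int n + 1)" by (rule ecomp_E[OF b e]) simp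
  have ae: "ecomp n P l a e \<in> E (j + l)" by (rule ecomp_E[OF a e refl])
  have A: "A \<in> E ?K" unfolding A_def by (rule ecomp_E[OF xa f]) simp
  have B: "B \<in> E ?K" unfolding B_def by (rule ecomp_E[OF xb e]) simp
  have Cc: "Cc \<in> E ?K" unfolding Cc_def by (rule ecomp_E[OF ya e]) simp
  have L: "eadd n P ?K A (esign n P ?K (l * (int n + 1))
             (ecomp n P l (eadd n P (i + j - int n + 1) (ecomp n P (j - int n + 1) x b)
                  (esign n P (i + j - int n + 1) (j * (int n + 1)) (ecomp n P j y a))) e))
        = eadd n P ?K (eadd n P ?K A (esign n P ?K (l * (int n + 1)) B))
            (esign n P ?K ((j + l) * (int n + 1)) Cc)"
  proof -
    have "ecomp n P l (eadd n P (i + j - int n + 1) (ecomp n P (j - int n + 1) x b)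
                  (esign n P (i + j - int n + 1) (j * (int n + 1)) (ecomp n P j y a))) e
          = eadd n P ?K B (esign n P ?K (j * (int n + 1)) Cc)"
      unfolding B_def Cc_def using xb ya e
      by (simp add: cp_ad_l[OF xb _ e, where k = ?K] cp_es_l[OF ya e, where k = ?K])
    moreover have ex: "l * (int n + 1) + j * (int n + 1) = (j + l) * (int n + 1)" by (simp add: algebra_simps)
    ultimately show ?thesis using A B Cc
      by (simp add: E_es_ad E_es_es G.assoc ex)
  qed
  have R: "eadd n P ?K (ecomp n P (j + l - int n + 1) x
               (eadd n P (j + l - int n + 1) (ecomp n P (l - int n + 1) a f)
                 (esign n P (j + l - int n + 1) (l * (int n + 1)) (ecomp n P l b e))))
             (esign n P ?K ((j + l) * (int n + 1)) (ecomp n P (j + l) y (ecomp n P l a e)))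
        = eadd n P ?K (eadd n P ?K A (esign n P ?K (l * (int n + 1)) B))
            (esign n P ?K ((j + l) * (int n + 1)) Cc)"
  proof -
    have 1: "ecomp n P (j + l - int n + 1) x (ecomp n P (l - int n + 1) a f) = A"
      unfolding A_def by (rule cp_assoc[OF x a f, symmetric]) simp
    have 2: "ecomp n P (j + l - int n + 1) x (ecomp n P l b e) = B"
      unfolding B_def by (rule cp_assoc[OF x b e, symmetric]) simp
    have 3: "ecomp n P (j + l) y (ecomp n P l a e) = Cc"
      unfolding Cc_def by (rule cp_assoc[OF y a e, symmetric]) simp
    show ?thesis using af be
      by (simp add: cp_ad_r[OF x af E_es_in[OF be], where k = ?K] cp_es_r[OF x be, where k = ?K] 1 2 3)
  qed
  show ?thesis unfolding p1 q1 r1 Tmul_def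
    using L R
    by (simp add: cp_assoc[OF x a e refl] i1(1) A_def[symmetric] )
qed

end


context ctx
begin

lemma sg_W: "sg \<in> W (int n) 0"
  using sigma_E by (simp add: W_def)

lemma sgE: "sg \<in> E (int n)" by (rule sigma_E)

lemma Tdif_in: assumes p: "p \<in> Tcar n P i" shows "Tdif n P d \<alpha> \<beta> i p \<in> Tcar n P (i + 1)"
proof -
  obtain x y where p1: "p = (x, y)" by (cases p)
  have x: "x \<in> W i (int n * i)" and y: "y \<in> W (i - int n + 1) (int n * (i - int n + 1 + 1))"
    using p by (simp_all add: Tcar_iff p1)
  have 1: "dl i x \<in> W (i + 1) (int n * (i + 1))"
    using W_dl[OF x refl] by (simp add: algebra_simps)
  have 2: "ecomp n P (int n) y sg \<in> W (i + 1) (int n * (i + 1))"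
  proof -
    have "ecomp n P (int n) y sg \<in> W (i + 1) (int n * (i - int n + 1 + 1) + 0)"
      by (rule W_mul[OF y sg_W]) simp
    moreover have "int n * (i - int n + 1 + 1) + 0 - int n * (i + 1) = int n * (1 - int n)"
      by (simp add: algebra_simps)
    ultimately show ?thesis using W_cong[of "int n * (i - int n + 1 + 1) + 0" "int n * (i + 1)" "i + 1"] even_nn
      by simp
  qed
  have 3: "dl (i - int n + 1) y \<in> W (i + 1 - int n + 1) (int n * (i + 1 - int n + 1 + 1))"
    using W_dl[OF y, of "i + 1 - int n + 1"] by (simp add: algebra_simps)
  show ?thesis unfolding p1 Tdif_def Tcar_iff using 1 2 3
    by (simp add: W_ad W_es)
qed

lemma Tdif_add: assumes p: "p \<in> Tcar n P i" and p': "p' \<in> Tcar n P i"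
  shows "Tdif n P d \<alpha> \<beta> i (Tadd n P i p p') = Tadd n P (i + 1) (Tdif n P d \<alpha> \<beta> i p) (Tdif n P d \<alpha> \<beta> i p')"
proof -
  obtain x y where p1: "p = (x, y)" and x: "x \<in> E i" and y: "y \<in> E (i - int n + 1)" using Tc[OF p] by blast
  obtain x' y' where p2: "p' = (x', y')" and x': "x' \<in> E i" and y': "y' \<in> E (i - int n + 1)" using Tc[OF p'] by blast
  interpret G: agrp "E (i + 1)" "eadd n P (i + 1)" "ezero n P (i + 1)" "eneg n P (i + 1)" by (rule Egrp)
  have m: "dl i x \<in> E (i + 1)" "dl i x' \<in> E (i + 1)" "ecomp n P (int n) y sg \<in> E (i + 1)" "ecomp n P (int n) y' sg \<in> E (i + 1)"
    by (rule dl_E[OF x refl], rule dl_E[OF x' refl], rule ecomp_E[OF y sgE], simp, rule ecomp_E[OF y' sgE], simp)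
  have e: "i - int n + 1 + 1 = i + 1 - int n + 1" by simp
  show ?thesis unfolding p1 p2 Tdif_def Tadd_def using m
    by (simp add: dl_ad[OF x x'] dl_ad[OF y y'] e cp_ad_l[OF y y' sgE, where k = "i + 1"] E_es_ad G.swap4)
qed

lemma Tdif_sm: assumes p: "p \<in> Tcar n P i"
  shows "Tdif n P d \<alpha> \<beta> i (Tsmult n P \<iota> i c p) = Tsmult n P \<iota> (i + 1) c (Tdif n P d \<alpha> \<beta> i p)"
proof -
  obtain x y where p1: "p = (x, y)" and x: "x \<in> E i" and y: "y \<in> E (i - int n + 1)" using Tc[OF p] by blast
  have m: "dl i x \<in> E (i + 1)" "ecomp n P (int n) y sg \<in> E (i + 1)"
    by (rule dl_E[OF x refl], rule ecomp_E[OF y sgE], simp)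
  have e: "i - int n + 1 + 1 = i + 1 - int n + 1" by simp
  show ?thesis unfolding p1 Tdif_def Tsmult_def using m
    by (simp add: dl_sm[OF x] dl_sm[OF y] e cp_sm_l[OF y sgE, where k = "i + 1"] E_es_sm E_ad_sm)
qed

lemma Tdif_dif: assumes p: "p \<in> Tcar n P i"
  shows "Tdif n P d \<alpha> \<beta> (i + 1) (Tdif n P d \<alpha> \<beta> i p) = Tzero n P (i + 2)"
proof -
  obtain x y where p1: "p = (x, y)" and x: "x \<in> E i" and y: "y \<in> E (i - int n + 1)" using Tc[OF p] by blast
  define Z where "Z = ecomp n P (int n) (dl (i - int n + 1) y) sg"
  have dy: "dl (i - int n + 1) y \<in> E (i - int n + 1 + 1)" by (rule dl_E[OF y refl])
  have Z: "Z \<in> E (i + 1 + 1)" unfolding Z_def by (rule ecomp_E[OF dy sgE]) simp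
  have ys: "ecomp n P (int n) y sg \<in> E (i + 1)" by (rule ecomp_E[OF y sgE]) simp
  have dx: "dl i x \<in> E (i + 1)" by (rule dl_E[OF x refl])
  have h1: "dl (i + 1) (ecomp n P (int n) y sg) = Z"
  proof -
    have "dl (i + 1) (ecomp n P (int n) y sg) = eadd n P (i + 1 + 1) (ecomp n P (int n) (dl (i - int n + 1) y) sg)
        (esign n P (i + 1 + 1) (i - int n + 1) (ecomp n P (int n + 1) y (dl (int n) sg)))"
      by (rule dl_cp[OF y sgE]) simp
    moreover have "ecomp n P (int n + 1) y (dl (int n) sg) = ezero n P (i + 1 + 1)"
      unfolding delta_sig by (rule cp_z_r[OF y]) simp
    ultimately show ?thesis using Z by (simp add: Z_def)
  qed
  have h2: "dl (i + 1) (dl i x) = ezero n P (i + 1 + 1)" by (rule dl_dl[OF x refl])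
  have first: "eadd n P (i + 1 + 1) (dl (i + 1) (eadd n P (i + 1) (dl i x) (esign n P (i + 1) (i + 1) (ecomp n P (int n) y sg))))
        (esign n P (i + 1 + 1) (i + 1 + 1) Z) = ezero n P (i + 1 + 1)"
    using dx ys Z by (simp add: dl_ad dl_es h1 h2 E_cancel)
  have second: "dl (i + 1 - int n + 1) (dl (i - int n + 1) y) = ezero n P (i + 1 - int n + 1 + 1)"
    by (rule dl_dl[OF y]) simp
  have e: "i + 1 + 1 = i + 2" "i + 1 - int n + 1 + 1 = i + 2 - int n + 1" by simp_all
  show ?thesis unfolding p1 Tdif_def Tzero_def using first second
    by (simp add: Z_def e)
qed

end


context agrp
begin

lemma leib1_grp:
  assumes m: "T1 \<in> S" "T2 \<in> S" "T3 \<in> S" "T4 \<in> S"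
    and p1: "even (e5 - (k + sj))" and p2: "even (k - (i + j1))"
  shows "ad (ad T1 (gsign ng i T2)) (gsign ng k (ad T3 (gsign ng sj T4)))
       = ad (ad T1 (gsign ng e5 T4)) (gsign ng i (ad T2 (gsign ng j1 T3)))"
proof -
  have "gsign ng e5 T4 = gsign ng (k + sj) T4" by (rule gsign_cong[OF p1])
  moreover have "gsign ng (i + j1) T3 = gsign ng k T3" by (rule gsign_cong) (use p2 in presburger)
  ultimately show ?thesis using m by (simp add: gsign_ad gsign_gsign assoc lcomm comm)
qed

lemma leib2_grp:
  assumes m: "U1 \<in> S" "U2 \<in> S" "U3 \<in> S" "U4 \<in> S" "V \<in> S"
    and p1: "odd (a - (ei + f + g))" and p2: "even ((sj + i2) - (ei + f))"
  shows "ad (ad U1 (gsign ng ei U2)) (gsign ng sj (ad U3 (gsign ng i2 U4))) =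
        ad (ad (ad U1 (gsign ng a V)) (gsign ng sj U3)) (gsign ng ei (ad U2 (gsign ng f (ad U4 (gsign ng g V)))))"
proof -
  have c: "ad (gsign ng a V) (gsign ng (ei + f + g) V) = z" by (rule gsign_cancel[OF m(5) p1])
  have u4: "gsign ng (ei + f) U4 = gsign ng (sj + i2) U4" by (rule gsign_cong) (use p2 in presburger)
  have "ad (ad (ad U1 (gsign ng a V)) (gsign ng sj U3)) (gsign ng ei (ad U2 (gsign ng f (ad U4 (gsign ng g V)))))
      = ad (ad (ad U1 (gsign ng ei U2)) (ad (gsign ng sj U3) (gsign ng (sj + i2) U4)))
           (ad (gsign ng a V) (gsign ng (ei + f + g) V))"
    using m by (simp add: gsign_ad gsign_gsign u4 assoc lcomm add.assoc)
  also have "\<dots> = ad (ad U1 (gsign ng ei U2)) (ad (gsign ng sj U3) (gsign ng (sj + i2) U4))"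
    using m by (simp add: c)
  finally show ?thesis using m by (simp add: gsign_ad gsign_gsign)
qed

end


context ctx
begin

lemma gsign_Tneg: "gsign (Tneg n P k) e p = (esign n P k e (fst p), esign n P (k - int n + 1) e (snd p))"
  by (cases p) (simp add: gsign_def Tneg_def esign_def)

lemma T_leib: assumes p: "p \<in> Tcar n P i" and q: "q \<in> Tcar n P j"
  shows "Tdif n P d \<alpha> \<beta> (i + j) (Tmul n P i j p q) =
     Tadd n P (i + j + 1) (Tmul n P (i + 1) j (Tdif n P d \<alpha> \<beta> i p) q)
       (gsign (Tneg n P (i + j + 1)) i (Tmul n P i (j + 1) p (Tdif n P d \<alpha> \<beta> j q)))"
proof -
  obtain x y where p1: "p = (x, y)" by (cases p)
  obtain a b where q1: "q = (a, b)" by (cases q)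
  have xW: "x \<in> W i (int n * i)" and yW: "y \<in> W (i - int n + 1) (int n * (i - int n + 1 + 1))"
    using p by (simp_all add: Tcar_iff p1)
  have aW: "a \<in> W j (int n * j)" and bW: "b \<in> W (j - int n + 1) (int n * (j - int n + 1 + 1))"
    using q by (simp_all add: Tcar_iff q1)
  have x: "x \<in> E i" and y: "y \<in> E (i - int n + 1)" and a: "a \<in> E j" and b: "b \<in> E (j - int n + 1)"
    using xW yW aW bW by (simp_all add: W_E)
  let ?K1 = "i + j + 1"
  let ?K = "i + j - int n + 1"
  let ?L = "i + j - int n + 1 + 1"
  interpret G1: agrp "E ?K1" "eadd n P ?K1" "ezero n P ?K1" "eneg n P ?K1" by (rule Egrp)
  interpret G2: agrp "E ?L" "eadd n P ?L" "ezero n P ?L" "eneg n P ?L" by (rule Egrp)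
  have dx: "dl i x \<in> E (i + 1)" by (rule dl_E[OF x refl])
  have da: "dl j a \<in> E (j + 1)" by (rule dl_E[OF a refl])
  have dy: "dl (i - int n + 1) y \<in> E (i - int n + 1 + 1)" by (rule dl_E[OF y refl])
  have db: "dl (j - int n + 1) b \<in> E (j - int n + 1 + 1)" by (rule dl_E[OF b refl])
  have ys: "ecomp n P (int n) y sg \<in> E (i + 1)" by (rule ecomp_E[OF y sgE]) simp
  have bs: "ecomp n P (int n) b sg \<in> E (j + 1)" by (rule ecomp_E[OF b sgE]) simp
  have xb: "ecomp n P (j - int n + 1) x b \<in> E ?K" by (rule ecomp_E[OF x b]) simp
  have ya: "ecomp n P j y a \<in> E ?K" by (rule ecomp_E[OF y a]) simp
  define T1 where "T1 = ecomp n P j (dl i x) a"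
  define T2 where "T2 = ecomp n P (j + 1) x (dl j a)"
  define T3 where "T3 = ecomp n P (int n) (ecomp n P (j - int n + 1) x b) sg"
  define T4 where "T4 = ecomp n P (int n) (ecomp n P j y a) sg"
  have T1: "T1 \<in> E ?K1" unfolding T1_def by (rule ecomp_E[OF dx a]) simp
  have T2: "T2 \<in> E ?K1" unfolding T2_def by (rule ecomp_E[OF x da]) simp
  have T3: "T3 \<in> E ?K1" unfolding T3_def by (rule ecomp_E[OF xb sgE]) simp
  have T4: "T4 \<in> E ?K1" unfolding T4_def by (rule ecomp_E[OF ya sgE]) simp
  define U1 where "U1 = ecomp n P (j - int n + 1) (dl i x) b"
  define U2 where "U2 = ecomp n P (j - int n + 1 + 1) x (dl (j - int n + 1) b)"
  define U3 where "U3 = ecomp n P j (dl (i - int n + 1) y) a"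
  define U4 where "U4 = ecomp n P (j + 1) y (dl j a)"
  define V2 where "V2 = ecomp n P (j + 1) y (ecomp n P (int n) b sg)"
  have U1: "U1 \<in> E ?L" unfolding U1_def by (rule ecomp_E[OF dx b]) simp
  have U2: "U2 \<in> E ?L" unfolding U2_def by (rule ecomp_E[OF x db]) simp
  have U3: "U3 \<in> E ?L" unfolding U3_def by (rule ecomp_E[OF dy a]) simp
  have U4: "U4 \<in> E ?L" unfolding U4_def by (rule ecomp_E[OF y da]) simp
  have V2: "V2 \<in> E ?L" unfolding V2_def by (rule ecomp_E[OF y bs]) simp
  have F1: "dl (i + j) (ecomp n P j x a) = eadd n P ?K1 T1 (esign n P ?K1 i T2)"
    unfolding T1_def T2_def by (rule dl_cp[OF x a refl])
  have F2: "ecomp n P (int n) (eadd n P ?K (ecomp n P (j - int n + 1) x b)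
              (esign n P ?K (j * (int n + 1)) (ecomp n P j y a))) sg
          = eadd n P ?K1 T3 (esign n P ?K1 (j * (int n + 1)) T4)"
    unfolding T3_def T4_def using xb ya
    by (simp add: cp_ad_l[OF xb _ sgE, where k = ?K1] cp_es_l[OF ya sgE, where k = ?K1])
  have F3: "ecomp n P j (eadd n P (i + 1) (dl i x) (esign n P (i + 1) (i + 1) (ecomp n P (int n) y sg))) a
          = eadd n P ?K1 T1 (esign n P ?K1 (i + 1 + int n * j) T4)"
  proof -
    have "ecomp n P j (ecomp n P (int n) y sg) a = ecomp n P (j + int n) y (ecomp n P j sg a)"
      by (rule cp_assoc[OF y sgE a]) simp
    also have "\<dots> = ecomp n P (j + int n) y (esign n P (j + int n) (int n * j) (ecomp n P (int n) a sg))"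
      by (simp add: W_eq[OF aW])
    also have "\<dots> = esign n P ?K1 (int n * j) (ecomp n P (j + int n) y (ecomp n P (int n) a sg))"
      by (rule cp_es_r[OF y sigE_in[OF a]]) simp
    also have "ecomp n P (j + int n) y (ecomp n P (int n) a sg) = T4"
      unfolding T4_def by (rule cp_assoc[OF y a sgE, symmetric]) simp
    finally have t5: "ecomp n P j (ecomp n P (int n) y sg) a = esign n P ?K1 (int n * j) T4" .
    show ?thesis unfolding T1_def[symmetric] using dx ys T4
      by (simp add: cp_ad_l[OF dx _ a, where k = ?K1] cp_es_l[OF ys a, where k = ?K1] T1_def t5 E_es_es)
  qed
  have F4: "ecomp n P (j + 1) x (eadd n P (j + 1) (dl j a) (esign n P (j + 1) (j + 1) (ecomp n P (int n) b sg)))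
          = eadd n P ?K1 T2 (esign n P ?K1 (j + 1) T3)"
  proof -
    have "ecomp n P (j + 1) x (ecomp n P (int n) b sg) = T3"
      unfolding T3_def by (rule cp_assoc[OF x b sgE, symmetric]) simp
    then show ?thesis unfolding T2_def using da bs
      by (simp add: cp_ad_r[OF x da _, where k = ?K1] cp_es_r[OF x bs, where k = ?K1])
  qed
  have C1: "eadd n P ?K1 (eadd n P ?K1 T1 (esign n P ?K1 i T2)) (esign n P ?K1 ?K1 (eadd n P ?K1 T3 (esign n P ?K1 (j * (int n + 1)) T4)))
      = eadd n P ?K1 (eadd n P ?K1 T1 (esign n P ?K1 (i + 1 + int n * j) T4)) (esign n P ?K1 i (eadd n P ?K1 T2 (esign n P ?K1 (j + 1) T3)))"
    unfolding esign_gs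
    by (rule G1.leib1_grp[OF T1 T2 T3 T4]) (simp_all add: algebra_simps)
  have G1: "dl ?K (eadd n P ?K (ecomp n P (j - int n + 1) x b) (esign n P ?K (j * (int n + 1)) (ecomp n P j y a)))
      = eadd n P ?L (eadd n P ?L U1 (esign n P ?L i U2))
          (esign n P ?L (j * (int n + 1)) (eadd n P ?L U3 (esign n P ?L (i - int n + 1) U4)))"
  proof -
    have 1: "dl ?K (ecomp n P (j - int n + 1) x b) = eadd n P ?L U1 (esign n P ?L i U2)"
      unfolding U1_def U2_def by (rule dl_cp[OF x b]) simp
    have 2: "dl ?K (ecomp n P j y a) = eadd n P ?L U3 (esign n P ?L (i - int n + 1) U4)"
      unfolding U3_def U4_def by (rule dl_cp[OF y a]) simp
    show ?thesis using xb ya by (simp add: dl_ad dl_es 1 2)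
  qed
  have H1: "ecomp n P (j - int n + 1) (eadd n P (i + 1) (dl i x) (esign n P (i + 1) (i + 1) (ecomp n P (int n) y sg))) b
      = eadd n P ?L U1 (esign n P ?L (i + 1 + int n * (j - int n + 1 + 1)) V2)"
  proof -
    have e: "esign n P (j - int n + 1 + int n) = esign n P (j + 1)" by simp
    have "ecomp n P (j - int n + 1) (ecomp n P (int n) y sg) b = ecomp n P (j + 1) y (ecomp n P (j - int n + 1) sg b)"
      by (rule cp_assoc[OF y sgE b]) simp
    also have "\<dots> = ecomp n P (j + 1) y (esign n P (j + 1) (int n * (j - int n + 1 + 1)) (ecomp n P (int n) b sg))"
      by (simp add: W_eq[OF bW] e)
    also have "\<dots> = esign n P ?L (int n * (j - int n + 1 + 1)) V2"
      unfolding V2_def by (rule cp_es_r[OF y bs]) simp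
    finally have v1: "ecomp n P (j - int n + 1) (ecomp n P (int n) y sg) b = esign n P ?L (int n * (j - int n + 1 + 1)) V2" .
    show ?thesis unfolding U1_def[symmetric] using dx ys V2
      by (simp add: cp_ad_l[OF dx _ b, where k = ?L] cp_es_l[OF ys b, where k = ?L] U1_def v1 E_es_es)
  qed
  have H2: "ecomp n P (j + 1) y (eadd n P (j + 1) (dl j a) (esign n P (j + 1) (j + 1) (ecomp n P (int n) b sg)))
      = eadd n P ?L U4 (esign n P ?L (j + 1) V2)"
    unfolding U4_def V2_def using da bs
    by (simp add: cp_ad_r[OF y da _, where k = ?L] cp_es_r[OF y bs, where k = ?L])
  have C2: "eadd n P ?L (eadd n P ?L U1 (esign n P ?L i U2))
          (esign n P ?L (j * (int n + 1)) (eadd n P ?L U3 (esign n P ?L (i - int n + 1) U4)))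
      = eadd n P ?L (eadd n P ?L (eadd n P ?L U1 (esign n P ?L (i + 1 + int n * (j - int n + 1 + 1)) V2))
            (esign n P ?L (j * (int n + 1)) U3))
          (esign n P ?L i (eadd n P ?L U2 (esign n P ?L ((j + 1) * (int n + 1)) (eadd n P ?L U4 (esign n P ?L (j + 1) V2)))))"
  proof -
    have o: "odd (i + 1 + int n * (j - int n + 1 + 1) - (i + (j + 1) * (int n + 1) + (j + 1)))"
    proof -
      have "i + 1 + int n * (j - int n + 1 + 1) - (i + (j + 1) * (int n + 1) + (j + 1)) = int n * (1 - int n) - 2 * j - 1"
        by (simp add: algebra_simps)
      moreover obtain t where "int n * (1 - int n) = 2 * t" using even_nn by (elim evenE)
      ultimately have "i + 1 + int n * (j - int n + 1 + 1) - (i + (j + 1) * (int n + 1) + (j + 1)) = 2 * (t - j) - 1"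
        by (simp add: algebra_simps)
      then show ?thesis by presburger
    qed
    have e: "even (j * (int n + 1) + (i - int n + 1) - (i + (j + 1) * (int n + 1)))"
    proof -
      have eq: "j * (int n + 1) + (i - int n + 1) - (i + (j + 1) * (int n + 1)) = - 2 * int n" by (simp add: algebra_simps)
      show ?thesis unfolding eq by simp
    qed
    show ?thesis unfolding esign_gs
      by (rule G2.leib2_grp[OF U1 U2 U3 U4 V2 o e])
  qed
  have e1: "i + j + 1 - int n + 1 = ?L" and e2: "i + 1 + j - int n + 1 = ?L" and e3: "i + (j + 1) - int n + 1 = ?L"
    and e4: "j + 1 - int n + 1 = j - int n + 1 + 1" by simp_all
  show ?thesis
    unfolding p1 q1 Tdif_def Tmul_def Tadd_def gsign_Tneg fst_conv snd_conv
    apply (simp only: e1 e2 e3 e4)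
    apply (simp only: F1 F2 F3 F4 G1 H1 H2 prod.inject U2_def[symmetric] U3_def[symmetric])
    using C1 C2 by simp
qed

end


context ctx
begin

lemma main: "dg_algebra (Tcar n P) (Tadd n P) (Tzero n P) (Tneg n P) (Tsmult n P \<iota>)
                    (Tmul n P) (Tone n P) (Tdif n P d \<alpha> \<beta>)"
  unfolding dg_algebra_def
proof (intro conjI allI ballI)
  show "\<And>i. kvs (Tcar n P i) (Tadd n P i) (Tzero n P i) (Tneg n P i) (Tsmult n P \<iota> i)" by (rule T_kvs)
  show "\<And>i j a b. a \<in> Tcar n P i \<Longrightarrow> b \<in> Tcar n P j \<Longrightarrow> Tmul n P i j a b \<in> Tcar n P (i + j)" by (rule Tmul_in)
  show "\<And>i j a a' b. a \<in> Tcar n P i \<Longrightarrow> a' \<in> Tcar n P i \<Longrightarrow> b \<in> Tcar n P j \<Longrightarrow>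
      Tmul n P i j (Tadd n P i a a') b = Tadd n P (i + j) (Tmul n P i j a b) (Tmul n P i j a' b)" by (rule Tmul_add_l)
  show "\<And>i j a b b'. a \<in> Tcar n P i \<Longrightarrow> b \<in> Tcar n P j \<Longrightarrow> b' \<in> Tcar n P j \<Longrightarrow>
      Tmul n P i j a (Tadd n P j b b') = Tadd n P (i + j) (Tmul n P i j a b) (Tmul n P i j a b')" by (rule Tmul_add_r)
  show "\<And>i j c a b. a \<in> Tcar n P i \<Longrightarrow> b \<in> Tcar n P j \<Longrightarrow>
      Tmul n P i j (Tsmult n P \<iota> i c a) b = Tsmult n P \<iota> (i + j) c (Tmul n P i j a b)" by (rule Tmul_sm_l)
  show "\<And>i j c a b. a \<in> Tcar n P i \<Longrightarrow> b \<in> Tcar n P j \<Longrightarrow>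
      Tmul n P i j a (Tsmult n P \<iota> j c b) = Tsmult n P \<iota> (i + j) c (Tmul n P i j a b)" by (rule Tmul_sm_r)
  show "\<And>i j l a b e. a \<in> Tcar n P i \<Longrightarrow> b \<in> Tcar n P j \<Longrightarrow> e \<in> Tcar n P l \<Longrightarrow>
      Tmul n P (i + j) l (Tmul n P i j a b) e = Tmul n P i (j + l) a (Tmul n P j l b e)" by (rule Tmul_assoc)
  show "Tone n P \<in> Tcar n P 0" by (rule Tone_in)
  show "\<And>i a. a \<in> Tcar n P i \<Longrightarrow> Tmul n P 0 i (Tone n P) a = a" by (rule Tone_l)
  show "\<And>i a. a \<in> Tcar n P i \<Longrightarrow> Tmul n P i 0 a (Tone n P) = a" by (rule Tone_r)
  show "\<And>i a. a \<in> Tcar n P i \<Longrightarrow> Tdif n P d \<alpha> \<beta> i a \<in> Tcar n P (i + 1)" by (rule Tdif_in)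
  show "\<And>i a b. a \<in> Tcar n P i \<Longrightarrow> b \<in> Tcar n P i \<Longrightarrow>
      Tdif n P d \<alpha> \<beta> i (Tadd n P i a b) = Tadd n P (i + 1) (Tdif n P d \<alpha> \<beta> i a) (Tdif n P d \<alpha> \<beta> i b)" by (rule Tdif_add)
  show "\<And>i c a. a \<in> Tcar n P i \<Longrightarrow>
      Tdif n P d \<alpha> \<beta> i (Tsmult n P \<iota> i c a) = Tsmult n P \<iota> (i + 1) c (Tdif n P d \<alpha> \<beta> i a)" by (rule Tdif_sm)
  show "\<And>i a. a \<in> Tcar n P i \<Longrightarrow> Tdif n P d \<alpha> \<beta> (i + 1) (Tdif n P d \<alpha> \<beta> i a) = Tzero n P (i + 2)" by (rule Tdif_dif)
  show "\<And>i j a b. a \<in> Tcar n P i \<Longrightarrow> b \<in> Tcar n P j \<Longrightarrow>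
      Tdif n P d \<alpha> \<beta> (i + j) (Tmul n P i j a b) =
        Tadd n P (i + j + 1) (Tmul n P (i + 1) j (Tdif n P d \<alpha> \<beta> i a) b)
          (gsign (Tneg n P (i + j + 1)) i (Tmul n P i (j + 1) a (Tdif n P d \<alpha> \<beta> j b)))" by (rule T_leib)
qed

end

theorem proposition2p13:
  fixes \<iota> :: "'k::field \<Rightarrow> 'g::ring_1"
    and n :: nat
    and P :: "nat \<Rightarrow> ('m,'g) rmod"
    and d :: "nat \<Rightarrow> 'm \<Rightarrow> 'm"
    and M :: "('m,'g) rmod"
    and \<alpha> \<beta> :: "'m \<Rightarrow> 'm"
  assumes "k_algebra \<iota>"
    and "n \<ge> 1"
    and "right_module M"
    and "\<forall>i<n. right_module (P i) \<and> fg_projective (P i)"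
    and "\<forall>i. 1 \<le> i \<and> i < n \<longrightarrow> module_hom (P i) (P (i - 1)) (d i)"
    and "module_hom (P 0) M \<alpha>"
    and "module_hom M (P (n - 1)) \<beta>"
    and "exact_seq n P d M \<alpha> \<beta>"
  shows "dg_algebra (Tcar n P) (Tadd n P) (Tzero n P) (Tneg n P) (Tsmult n P \<iota>)
                    (Tmul n P) (Tone n P) (Tdif n P d \<alpha> \<beta>)"
proof -
  interpret ctx \<iota> n P d M \<alpha> \<beta> using assms by (unfold_locales)
  show ?thesis by (rule main)
qed

end
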